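(* For every composition $\alpha$, $$\Theta_{\mathrm{QSym}}(S_\alpha)=\begin{cases}2^{\ell(\alpha)}S_\alpha & \text{if every part of }\alpha\text{ is odd},\\ 0&\text{otherwise.}\end{cases}$$
   Context: $\mathrm{QSym}$ is the graded connected Hopf algebra of quasisymmetric functions with monomial basis $M_\alpha=\sum_{i_1<\cdots<i_\ell}x_{i_1}^{\alpha_1}\cdots x_{i_\ell}^{\alpha_\ell}$ ($\alpha=(\alpha_1,\dots,\alpha_\ell)$ a composition, $\ell(\alpha)=\ell$), product the ordinary product and coproduct $\Delta(M_\alpha)=\sum_{\beta\gamma=\alpha}M_\beta\otimes M_\gamma$. For compositions $\alpha,\beta$ of $n$, $\beta\le\alpha$ means the set of partial sums $\{\beta_1,\beta_1+\beta_2,\dots\}$ (excluding the total) is contained in that of $\alpha$. Shuffle functions: for $\alpha$ let $\mathrm{OtE}(\alpha)=\{i:\alpha_i\text{ odd},\ \alpha_{i+1}\text{ even}\}=\{i_1<\cdots<i_k\}$ and $m_o(\alpha)=(\alpha_1+\cdots+\alpha_{i_1},\ \alpha_{i_1+1}+\cdots+\alpha_{i_2},\ \dots,\ \alpha_{i_k+1}+\cdots+\alpha_\ell)$. For $m_o(\alpha)\le\beta\le\alpha$, each part $\beta_i$ is a sum of a block of consecutive parts of $\alpha$; with $\mathrm{O}(i),\mathrm{E}(i)$ the numbers of odd and even parts of that block put $c_\alpha^\beta=\prod_i\frac{1}{\mathrm{O}(i)!\mathrm{E}(i)!}$. Then $S_\alpha=\sum_{m_o(\alpha)\le\beta\le\alpha}c_\alpha^\beta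 M_\beta$. Characters: a character of a graded connected Hopf algebra $H$ is a multiplicative linear map $H\to\mathbb{C}$; characters form a group under convolution $\zeta\zeta'=m\circ(\zeta\otimes\zeta')\circ\Delta$, with inverse $\zeta^{-1}=\zeta\circ\mathcal{S}$ ($\mathcal{S}$ the antipode); $\bar\zeta$ is the character equal to $(-1)^n\zeta$ on the degree-$n$ component. Let $\zeta_{\mathrm{QSym}}(f(x_1,x_2,\dots))=f(1,0,0,\dots)$. $\Theta_{\mathrm{QSym}}$ is the unique graded Hopf algebra morphism $\mathrm{QSym}\to\mathrm{QSym}$ with $\zeta_{\mathrm{QSym}}\circ\Theta_{\mathrm{QSym}}=\overline{\zeta_{\mathrm{QSym}}^{-1}}\,\zeta_{\mathrm{QSym}}$ (convolution product). *)

theory Defs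
  imports Complex_Main
begin

definition is_comp :: "nat list \<Rightarrow> bool" where
  "is_comp a \<longleftrightarrow> (\<forall>x\<in>set a. 0 < x)"

definition psum :: "nat list \<Rightarrow> nat \<Rightarrow> nat" where
  "psum a k = sum_list (take k a)"

definition descents :: "nat list \<Rightarrow> nat set" where
  "descents a = {psum a i | i. 0 < i \<and> i < length a}"

definition comp_le :: "nat list \<Rightarrow> nat list \<Rightarrow> bool" where
  "comp_le b a \<longleftrightarrow> is_comp a \<and> is_comp b \<and> sum_list b = sum_list a
      \<and> descents b \<subseteq> descents a"

(* An element of QSym is represented by its coordinate vector f in the basis M:
   f = sum_alpha f(alpha) M_alpha, finitely supported on compositions. *)
definition qsym :: "(nat list \<Rightarrow> complex) \<Rightarrow> bool" where
  "qsym f \<longleftrightarrow> finite {b. f b \<noteq> 0} \<and> (\<forall>b. f b \<noteq> 0 \<longrightarrow> is_comp b)"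

definition M :: "nat list \<Rightarrow> nat list \<Rightarrow> complex" where
  "M a = (\<lambda>b. if b = a then 1 else 0)"

(* quasi-shuffles (with multiplicity): M_a M_b = sum over g in qsh a b of M_g *)
fun qsh :: "nat list \<Rightarrow> nat list \<Rightarrow> nat list list" where
  "qsh [] b = [b]"
| "qsh (x # a) [] = [x # a]"
| "qsh (x # a) (y # b) =
     map ((#) x) (qsh a (y # b)) @ map ((#) y) (qsh (x # a) b) @ map ((#) (x + y)) (qsh a b)"

definition qmult :: "(nat list \<Rightarrow> complex) \<Rightarrow> (nat list \<Rightarrow> complex) \<Rightarrow> nat list \<Rightarrow> complex" where
  "qmult f g = (\<lambda>c. \<Sum>a\<in>{a. f a \<noteq> 0}. \<Sum>b\<in>{b. g b \<noteq> 0}.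
        f a * g b * of_nat (count_list (qsh a b) c))"

(* coproduct: Delta(M_a) = sum_{b @ c = a} M_b \<otimes> M_c; an element of QSym \<otimes> QSym
   is represented by its coordinates in the basis M_b \<otimes> M_c *)
definition coprod :: "(nat list \<Rightarrow> complex) \<Rightarrow> (nat list \<times> nat list \<Rightarrow> complex)" where
  "coprod f = (\<lambda>(b, c). f (b @ c))"

definition counit :: "(nat list \<Rightarrow> complex) \<Rightarrow> complex" where
  "counit f = f []"

(* T \<otimes> T applied to an element of QSym \<otimes> QSym *)
definition tensor_map ::
  "((nat list \<Rightarrow> complex) \<Rightarrow> (nat list \<Rightarrow> complex)) \<Rightarrow> (nat list \<times> nat list \<Rightarrow> complex)
     \<Rightarrow> (nat list \<times> nat list \<Rightarrow> complex)" where
  "tensor_map T F = (\<lambda>(b', c'). \<Sum>p\<in>{p. F p \<noteq> 0}. F p * T (M (fst p)) b' * T (M (snd p)) c')"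

definition graded_hopf_morphism :: "((nat list \<Rightarrow> complex) \<Rightarrow> (nat list \<Rightarrow> complex)) \<Rightarrow> bool" where
  "graded_hopf_morphism T \<longleftrightarrow>
     (\<forall>f. qsym f \<longrightarrow> qsym (T f)) \<and>
     (\<forall>f g (x::complex) y. qsym f \<longrightarrow> qsym g \<longrightarrow>
        T (\<lambda>b. x * f b + y * g b) = (\<lambda>b. x * T f b + y * T g b)) \<and>
     (\<forall>a b. is_comp a \<longrightarrow> T (M a) b \<noteq> 0 \<longrightarrow> sum_list b = sum_list a) \<and>
     T (M []) = M [] \<and>
     (\<forall>f g. qsym f \<longrightarrow> qsym g \<longrightarrow> T (qmult f g) = qmult (T f) (T g)) \<and>
     (\<forall>f. qsym f \<longrightarrow> coprod (T f) = tensor_map T (coprod f)) \<and>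
     (\<forall>f. qsym f \<longrightarrow> counit (T f) = counit f)"

(* extension by linearity of a functional phi (phi a = value on M_a) *)
definition lin_ext :: "(nat list \<Rightarrow> complex) \<Rightarrow> (nat list \<Rightarrow> complex) \<Rightarrow> complex" where
  "lin_ext phi f = (\<Sum>b\<in>{b. f b \<noteq> 0}. f b * phi b)"

definition conv :: "(nat list \<Rightarrow> complex) \<Rightarrow> (nat list \<Rightarrow> complex) \<Rightarrow> nat list \<Rightarrow> complex" where
  "conv phi psi a = (\<Sum>i\<le>length a. phi (take i a) * psi (drop i a))"

definition eps :: "nat list \<Rightarrow> complex" where
  "eps a = (if a = [] then 1 else 0)"

definition cbar :: "(nat list \<Rightarrow> complex) \<Rightarrow> nat list \<Rightarrow> complex" where
  "cbar phi a = (-1) ^ sum_list a * phi a"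

(* M_a evaluated at a point x with x_i = 0 for i \<ge> N (variables indexed from 0) *)
definition M_eval :: "nat list \<Rightarrow> (nat \<Rightarrow> complex) \<Rightarrow> nat \<Rightarrow> complex" where
  "M_eval a x N = (\<Sum>I\<in>{I. I \<subseteq> {..<N} \<and> card I = length a}.
       \<Prod>j<length a. x (sorted_list_of_set I ! j) ^ (a ! j))"

definition zetaQ :: "nat list \<Rightarrow> complex" where
  "zetaQ a = M_eval a (\<lambda>i. if i = 0 then 1 else 0) 1"

definition zeta_inv :: "nat list \<Rightarrow> complex" where
  "zeta_inv = (THE chi. (\<forall>a. \<not> is_comp a \<longrightarrow> chi a = 0) \<and>
       (\<forall>a. is_comp a \<longrightarrow> conv chi zetaQ a = eps a \<and> conv zetaQ chi a = eps a))"

definition is_Theta :: "((nat list \<Rightarrow> complex) \<Rightarrow> (nat list \<Rightarrow> complex)) \<Rightarrow> bool" where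
  "is_Theta T \<longleftrightarrow> graded_hopf_morphism T \<and>
     (\<forall>a. is_comp a \<longrightarrow> lin_ext zetaQ (T (M a)) = conv (cbar zeta_inv) zetaQ a)"

(* OtE(a), positions 1-indexed: a_i odd and a_{i+1} even *)
definition OtE :: "nat list \<Rightarrow> nat set" where
  "OtE a = {i. 0 < i \<and> i < length a \<and> odd (a ! (i - 1)) \<and> even (a ! i)}"

(* coarsening of a obtained by cutting after the (sorted) positions ks *)
definition block_sums :: "nat list \<Rightarrow> nat list \<Rightarrow> nat list" where
  "block_sums a ks = (let bs = 0 # ks @ [length a] in
     map (\<lambda>i. sum_list (take (bs ! (i + 1) - bs ! i) (drop (bs ! i) a))) [0..<length ks + 1])"

definition m_o :: "nat list \<Rightarrow> nat list" where
  "m_o a = (if a = [] then [] else block_sums a (sorted_list_of_set (OtE a)))"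

(* number of odd / even parts of a in the block of a forming the i-th part (0-indexed) of b *)
definition blockO :: "nat list \<Rightarrow> nat list \<Rightarrow> nat \<Rightarrow> nat" where
  "blockO a b i = card {j. j < length a \<and> odd (a ! j) \<and>
       psum b i \<le> psum a j \<and> psum a (Suc j) \<le> psum b (Suc i)}"

definition blockE :: "nat list \<Rightarrow> nat list \<Rightarrow> nat \<Rightarrow> nat" where
  "blockE a b i = card {j. j < length a \<and> even (a ! j) \<and>
       psum b i \<le> psum a j \<and> psum a (Suc j) \<le> psum b (Suc i)}"

definition coeff_c :: "nat list \<Rightarrow> nat list \<Rightarrow> complex" where
  "coeff_c a b = (\<Prod>i<length b. 1 / (of_nat (fact (blockO a b i)) * of_nat (fact (blockE a b i))))"

definition S :: "nat list \<Rightarrow> nat list \<Rightarrow> complex" where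
  "S a = (\<lambda>b. if comp_le (m_o a) b \<and> comp_le b a then coeff_c a b else 0)"

end

theory Submission
  imports Defs
begin


definition parts :: "'a list \<Rightarrow> 'a list list set" where
  "parts a = {P. concat P = a \<and> [] \<notin> set P}"

lemma parts_finite: "finite (parts a)"
proof -
  have "parts a \<subseteq> {P. set P \<subseteq> {B. set B \<subseteq> set a \<and> length B \<le> length a} \<and> length P \<le> length a}"
  proof
    fix P assume "P \<in> parts a"
    hence c: "concat P = a" and ne: "[] \<notin> set P" by (auto simp: parts_def)
    have "length P \<le> length (concat P)" using ne
    proof (induction P)
      case (Cons B P)
      hence "B \<noteq> []" by auto
      hence "length B \<ge> 1" by (simp add: Suc_le_eq)
      thus ?case using Cons by simp
    qed simp
    moreover have "\<forall>B\<in>set P. set B \<subseteq> set a \<and> length B \<le> length a"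
      using c by (auto simp: length_concat intro!: member_le_sum_list)
    ultimately show "P \<in> {P. set P \<subseteq> {B. set B \<subseteq> set a \<and> length B \<le> length a} \<and> length P \<le> length a}"
      using c by auto
  qed
  moreover have "finite {B. set B \<subseteq> set a \<and> length B \<le> length a}"
    by (rule finite_lists_length_le) simp
  hence "finite {P. set P \<subseteq> {B. set B \<subseteq> set a \<and> length B \<le> length a} \<and> length P \<le> length a}"
    by (rule finite_lists_length_le)
  ultimately show ?thesis by (rule finite_subset)
qed

lemma Nil_in_parts: "([] \<in> parts a) = (a = [])"
  by (auto simp: parts_def)

lemma parts_Nil: "parts [] = {[]}"
proof -
  have "P = []" if "concat P = []" "[] \<notin> set P" for P :: "'a list list"
    using that by (cases P) auto
  thus ?thesis by (auto simp: parts_def)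
qed

lemma sum_parts_first:
  "(\<Sum>P\<in>parts a - {[]}. h P) = (\<Sum>m\<in>{1..length a}. \<Sum>P'\<in>parts (drop m a). h (take m a # P'))"
proof -
  have "(\<Sum>m\<in>{1..length a}. \<Sum>P'\<in>parts (drop m a). h (take m a # P'))
      = (\<Sum>(m,P')\<in>Sigma {1..length a} (\<lambda>m. parts (drop m a)). h (take m a # P'))"
    by (rule sum.Sigma) (auto simp: parts_finite)
  also have "\<dots> = (\<Sum>P\<in>parts a - {[]}. h P)"
  proof (rule sum.reindex_bij_witness[where i="\<lambda>P. (length (hd P), tl P)" and j="\<lambda>(m,P'). take m a # P'"])
    fix P assume P: "P \<in> parts a - {[]}"
    then obtain B P' where PB: "P = B # P'" by (cases P) auto
    with P have "a = B @ concat P'" "B \<noteq> []" "[] \<notin> set P'" by (auto simp: parts_def)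
    thus "(case (length (hd P), tl P) of (m, P') \<Rightarrow> take m a # P') = P" 
      and "(length (hd P), tl P) \<in> Sigma {1..length a} (\<lambda>m. parts (drop m a))"
      using PB by (auto simp: parts_def Suc_le_eq)
  next
    fix mP assume "mP \<in> Sigma {1..length a} (\<lambda>m. parts (drop m a))"
    then obtain m P' where mP: "mP = (m,P')" "1 \<le> m" "m \<le> length a" "concat P' = drop m a" "[] \<notin> set P'"
      by (auto simp: parts_def)
    thus "(length (hd (case mP of (m, P') \<Rightarrow> take m a # P')), tl (case mP of (m, P') \<Rightarrow> take m a # P')) = mP"
      by auto
    from mP show "(case mP of (m, P') \<Rightarrow> take m a # P') \<in> parts a - {[]}"
      by (auto simp: parts_def)
    from mP show "h (case mP of (m, P') \<Rightarrow> take m a # P') = (case mP of (m, P') \<Rightarrow> h (take m a # P'))"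
      by simp
  qed
  finally show ?thesis ..
qed

lemma sum_parts_last:
  "(\<Sum>P\<in>parts a - {[]}. h P) = (\<Sum>m<length a. \<Sum>P'\<in>parts (take m a). h (P' @ [drop m a]))"
proof -
  have "(\<Sum>m<length a. \<Sum>P'\<in>parts (take m a). h (P' @ [drop m a]))
      = (\<Sum>(m,P')\<in>Sigma {..<length a} (\<lambda>m. parts (take m a)). h (P' @ [drop m a]))"
    by (rule sum.Sigma) (auto simp: parts_finite)
  also have "\<dots> = (\<Sum>P\<in>parts a - {[]}. h P)"
  proof (rule sum.reindex_bij_witness[where i="\<lambda>P. (length (concat (butlast P)), butlast P)" and j="\<lambda>(m,P'). P' @ [drop m a]"])
    fix P assume P: "P \<in> parts a - {[]}"
    then obtain B P' where PB: "P = P' @ [B]" by (cases P rule: rev_cases) auto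
    with P have "a = concat P' @ B" "B \<noteq> []" "[] \<notin> set P'" by (auto simp: parts_def)
    thus "(case (length (concat (butlast P)), butlast P) of (m, P') \<Rightarrow> P' @ [drop m a]) = P" 
      and "(length (concat (butlast P)), butlast P) \<in> Sigma {..<length a} (\<lambda>m. parts (take m a))"
      using PB by (auto simp: parts_def)
  next
    fix mP assume "mP \<in> Sigma {..<length a} (\<lambda>m. parts (take m a))"
    then obtain m P' where mP: "mP = (m,P')" "m < length a" "concat P' = take m a" "[] \<notin> set P'"
      by (auto simp: parts_def)
    thus "(length (concat (butlast (case mP of (m, P') \<Rightarrow> P' @ [drop m a]))), butlast (case mP of (m, P') \<Rightarrow> P' @ [drop m a])) = mP"
      by auto
    from mP show "(case mP of (m, P') \<Rightarrow> P' @ [drop m a]) \<in> parts a - {[]}"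
      by (auto simp: parts_def)
    from mP show "h (case mP of (m, P') \<Rightarrow> P' @ [drop m a]) = (case mP of (m, P') \<Rightarrow> h (P' @ [drop m a]))"
      by simp
  qed
  finally show ?thesis ..
qed

lemma sum_parts_split:
  "(\<Sum>P\<in>parts a. \<Sum>k\<in>{1..length P}. h (take k P) (drop k P)) =
   (\<Sum>m\<in>{1..length a}. \<Sum>P1\<in>parts (take m a) - {[]}. \<Sum>P2\<in>parts (drop m a). h P1 P2)"
proof -
  have "(\<Sum>P\<in>parts a. \<Sum>k\<in>{1..length P}. h (take k P) (drop k P))
     = (\<Sum>(P,k)\<in>Sigma (parts a) (\<lambda>P. {1..length P}). h (take k P) (drop k P))"
    by (rule sum.Sigma) (auto simp: parts_finite)
  also have "\<dots> = (\<Sum>(m,Q)\<in>Sigma {1..length a} (\<lambda>m. (parts (take m a) - {[]}) \<times> parts (drop m a)). h (fst Q) (snd Q))"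
  proof (rule sum.reindex_bij_witness[where i="\<lambda>(m,(P1,P2)). (P1 @ P2, length P1)" 
        and j="\<lambda>(P,k). (length (concat (take k P)), (take k P, drop k P))"])
    fix Pk assume "Pk \<in> Sigma (parts a) (\<lambda>P. {1..length P})"
    then obtain P k where Pk: "Pk = (P,k)" "concat P = a" "[] \<notin> set P" "1 \<le> k" "k \<le> length P"
      by (auto simp: parts_def)
    have a: "a = concat (take k P) @ concat (drop k P)" using Pk
      by (metis append_take_drop_id concat_append)
    have ne: "take k P \<noteq> []" using Pk by auto
    have "concat (take k P) \<noteq> []" using ne Pk(3)
      by (metis concat_eq_Nil_conv in_set_takeD list.set_sel(1) take_eq_Nil)
    hence "length (concat (take k P)) \<ge> 1" by (simp add: Suc_le_eq)
    moreover have "take (length (concat (take k P))) a = concat (take k P)"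
      "drop (length (concat (take k P))) a = concat (drop k P)" using a by (metis append_eq_conv_conj)+
    moreover have "length (concat (take k P)) \<le> length a" using a by simp
    ultimately show "(case (case Pk of (P, k) \<Rightarrow> (length (concat (take k P)), take k P, drop k P)) of
         (m, P1, P2) \<Rightarrow> (P1 @ P2, length P1)) = Pk"
      and "(case Pk of (P, k) \<Rightarrow> (length (concat (take k P)), take k P, drop k P))
       \<in> Sigma {1..length a} (\<lambda>m. (parts (take m a) - {[]}) \<times> parts (drop m a))"
      using Pk ne by (auto simp: parts_def dest: in_set_takeD in_set_dropD)
    show "(case case Pk of (P, k) \<Rightarrow> (length (concat (take k P)), take k P, drop k P) of
          (m, Q) \<Rightarrow> h (fst Q) (snd Q)) = (case Pk of (P, k) \<Rightarrow> h (take k P) (drop k P))" using Pk by simp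
  next
    fix mQ assume "mQ \<in> Sigma {1..length a} (\<lambda>m. (parts (take m a) - {[]}) \<times> parts (drop m a))"
    moreover obtain m P1 P2 where mQ00: "mQ = (m,(P1,P2))" by (cases mQ) auto
    ultimately have mQ0: "mQ = (m,(P1,P2))" "m \<in> {1..length a}" "P1 \<in> parts (take m a) - {[]}"
       "P2 \<in> parts (drop m a)" by auto
    hence mQ: "mQ = (m,(P1,P2))" "1 \<le> m" "m \<le> length a" "concat P1 = take m a"
      "[] \<notin> set P1" "P1 \<noteq> []" "concat P2 = drop m a" "[] \<notin> set P2"
      by (auto simp: parts_def)
    have "length P1 \<ge> 1" using mQ by (simp add: Suc_le_eq)
    then show "(case (case mQ of (m, P1, P2) \<Rightarrow> (P1 @ P2, length P1)) of
         (P, k) \<Rightarrow> (length (concat (take k P)), take k P, drop k P)) = mQ"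
      "(case mQ of (m, P1, P2) \<Rightarrow> (P1 @ P2, length P1)) \<in> Sigma (parts a) (\<lambda>P. {1..length P})"
      using mQ by (auto simp: parts_def)
  qed
  also have "\<dots> = (\<Sum>m\<in>{1..length a}. \<Sum>Q\<in>(parts (take m a) - {[]}) \<times> parts (drop m a). h (fst Q) (snd Q))"
    by (rule sum.Sigma[symmetric]) (auto simp: parts_finite)
  also have "\<dots> = (\<Sum>m\<in>{1..length a}. \<Sum>P1\<in>parts (take m a) - {[]}. \<Sum>P2\<in>parts (drop m a). h P1 P2)"
    by (simp add: sum.cartesian_product split_beta)
  finally show ?thesis .
qed


definition oc :: "nat list \<Rightarrow> nat" where "oc B = length (filter odd B)"
definition ec :: "nat list \<Rightarrow> nat" where "ec B = length (filter even B)"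
definition cw :: "nat list \<Rightarrow> complex" where
  "cw B = 1 / (of_nat (fact (oc B)) * of_nat (fact (ec B)))"
definition okb :: "nat list \<Rightarrow> bool" where "okb B \<longleftrightarrow> OtE B = {}"
definition u :: "nat list \<Rightarrow> complex" where "u B = (if okb B then cw B else 0)"
definition w :: "nat list \<Rightarrow> complex" where "w B = u B * (-1) ^ (oc B + 1)"
definition g :: "nat list \<Rightarrow> complex" where "g G = (\<Sum>P\<in>parts G. prod_list (map w P))"
definition f :: "nat list \<Rightarrow> complex" where
  "f G = (\<Sum>P\<in>parts G - {[]}. if odd (sum_list (last P)) then prod_list (map w P) else 0)"

definition EO :: "nat list \<Rightarrow> bool" where
  "EO V \<longleftrightarrow> (\<exists>Es Os. V = Es @ Os \<and> (\<forall>x\<in>set Es. even x) \<and> (\<forall>x\<in>set Os. odd x))"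
definition OE :: "nat list \<Rightarrow> bool" where
  "OE V \<longleftrightarrow> (\<exists>Os Es. V = Os @ Es \<and> (\<forall>x\<in>set Os. odd x) \<and> (\<forall>x\<in>set Es. even x))"
definition shape :: "nat list \<Rightarrow> bool" where
  "shape G \<longleftrightarrow> (\<exists>X Y Z. G = X @ Y @ Z \<and> (\<forall>x\<in>set X. odd x) \<and> (\<forall>x\<in>set Y. even x) \<and> (\<forall>x\<in>set Z. odd x))"

definition cfg :: "nat list \<Rightarrow> complex" where
  "cfg G = (if OE G then (-1) ^ ec G / (of_nat (fact (oc G)) * of_nat (fact (ec G))) else 0)"

lemma odd_sum_list_iff: "odd (sum_list B) \<longleftrightarrow> odd (oc B)"
  by (induction B) (auto simp: oc_def)

lemma oc_append[simp]: "oc (A @ B) = oc A + oc B" by (simp add: oc_def)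
lemma ec_append[simp]: "ec (A @ B) = ec A + ec B" by (simp add: ec_def)
lemma oc_all_odd: "\<forall>x\<in>set A. odd x \<Longrightarrow> oc A = length A" by (simp add: oc_def)
lemma ec_all_odd: "\<forall>x\<in>set A. odd x \<Longrightarrow> ec A = 0" by (simp add: ec_def filter_empty_conv)
lemma oc_all_even: "\<forall>x\<in>set A. even x \<Longrightarrow> oc A = 0" by (simp add: oc_def filter_empty_conv)
lemma ec_all_even: "\<forall>x\<in>set A. even x \<Longrightarrow> ec A = length A" by (simp add: ec_def)

lemma EO_okb: "EO V \<Longrightarrow> okb V"
proof -
  assume "EO V"
  then obtain Es Os where V: "V = Es @ Os" "\<forall>x\<in>set Es. even x" "\<forall>x\<in>set Os. odd x" by (auto simp: EO_def)
  have False if i: "i \<in> OtE V" for i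
  proof -
    from i have i0: "0 < i" "i < length V" "odd (V ! (i - 1))" "even (V ! i)" by (auto simp: OtE_def)
    show False
    proof (cases "i < length Es")
      case True
      hence "i - 1 < length Es" by simp
      hence "V ! (i - 1) = Es ! (i - 1)" using V by (simp add: nth_append)
      moreover have "Es ! (i - 1) \<in> set Es" using True by simp
      ultimately show False using V i0 by auto
    next
      case False
      hence "V ! i = Os ! (i - length Es)" using V by (simp add: nth_append)
      moreover have "Os ! (i - length Es) \<in> set Os" using False i0 V by simp
      ultimately show False using V i0 by auto
    qed
  qed
  thus "okb V" by (auto simp: okb_def)
qed

lemma okb_EO: "okb V \<Longrightarrow> EO V"
proof (induction V)
  case Nil thus ?case by (auto simp: EO_def)
next
  case (Cons x V)
  have "okb V"
  proof -
    have False if i: "i \<in> OtE V" for i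
    proof -
      from i have "Suc i \<in> OtE (x # V)" by (cases i) (auto simp: OtE_def)
      thus False using Cons.prems by (auto simp: okb_def)
    qed
    thus ?thesis by (auto simp: okb_def)
  qed
  with Cons.IH obtain Es Os where V: "V = Es @ Os" "\<forall>x\<in>set Es. even x" "\<forall>x\<in>set Os. odd x" by (auto simp: EO_def)
  show ?case
  proof (cases "even x")
    case True
    hence "x # V = (x # Es) @ Os" "\<forall>y\<in>set (x#Es). even y" using V by auto
    thus ?thesis using V unfolding EO_def by blast
  next
    case False
    have "Es = []"
    proof (rule ccontr)
      assume "Es \<noteq> []"
      hence "1 \<in> OtE (x # V)" using False V by (auto simp: OtE_def nth_append neq_Nil_conv)
      thus False using Cons.prems by (auto simp: okb_def)
    qed
    hence "x # V = [] @ (x # Os)" "\<forall>y\<in>set (x#Os). odd y" using V False by auto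
    thus ?thesis unfolding EO_def by (metis empty_iff list.set(1))
  qed
qed

lemma okb_iff_EO: "okb V \<longleftrightarrow> EO V" using okb_EO EO_okb by blast

lemma OE_EO_shape: "OE U \<Longrightarrow> EO V \<Longrightarrow> shape (U @ V)"
proof -
  assume "OE U" "EO V"
  then obtain O1 E1 E2 O2 where "U = O1 @ E1" "V = E2 @ O2" "\<forall>x\<in>set O1. odd x" "\<forall>x\<in>set E1. even x"
    "\<forall>x\<in>set E2. even x" "\<forall>x\<in>set O2. odd x" unfolding OE_def EO_def by blast
  hence "U @ V = O1 @ (E1 @ E2) @ O2" "\<forall>x\<in>set (E1 @ E2). even x" by auto
  thus ?thesis unfolding shape_def using \<open>\<forall>x\<in>set O1. odd x\<close> \<open>\<forall>x\<in>set O2. odd x\<close> by blast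
qed

lemma EO_Nil: "EO []" unfolding EO_def by (rule exI[of _ "[]"], rule exI[of _ "[]"]) simp

lemma OE_shape: "OE U \<Longrightarrow> shape U"
  using OE_EO_shape[OF _ EO_Nil, of U] by simp

lemma OE_last_odd: "OE G \<Longrightarrow> G \<noteq> [] \<Longrightarrow> odd (last G) \<Longrightarrow> \<forall>x\<in>set G. odd x"
proof -
  assume "OE G" "G \<noteq> []" "odd (last G)"
  then obtain Os Es where G: "G = Os @ Es" "\<forall>x\<in>set Os. odd x" "\<forall>x\<in>set Es. even x"
    unfolding OE_def by blast
  have "Es = []"
  proof (rule ccontr)
    assume "Es \<noteq> []"
    hence "last G = last Es" "last Es \<in> set Es" using G by auto
    thus False using G \<open>odd (last G)\<close> by auto
  qed
  thus ?thesis using G by simp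
qed

lemma w_EO: "EO V \<Longrightarrow> w V = (-1) ^ (oc V + 1) / (of_nat (fact (oc V)) * of_nat (fact (ec V)))"
  by (simp add: w_def u_def okb_iff_EO cw_def)

lemma cfg_OE: "OE V \<Longrightarrow> cfg V = (-1) ^ ec V / (of_nat (fact (oc V)) * of_nat (fact (ec V)))"
  by (simp add: cfg_def)

lemma g_Nil: "g [] = 1" by (simp add: g_def parts_Nil)

lemma g_rec: "G \<noteq> [] \<Longrightarrow> g G = (\<Sum>m<length G. g (take m G) * w (drop m G))"
proof -
  assume G: "G \<noteq> []"
  hence "parts G = parts G - {[]}" using Nil_in_parts[of G] by auto
  hence "g G = (\<Sum>P\<in>parts G - {[]}. prod_list (map w P))" by (simp add: g_def)
  also have "\<dots> = (\<Sum>m<length G. \<Sum>P'\<in>parts (take m G). prod_list (map w (P' @ [drop m G])))"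
    by (rule sum_parts_last)
  also have "\<dots> = (\<Sum>m<length G. g (take m G) * w (drop m G))"
    by (simp add: g_def sum_distrib_right)
  finally show ?thesis .
qed

lemma f_rec: "f G = (\<Sum>m<length G. g (take m G) * w (drop m G) * (if odd (oc (drop m G)) then 1 else 0))"
proof -
  have "f G = (\<Sum>m<length G. \<Sum>P'\<in>parts (take m G). (if odd (sum_list (last (P' @ [drop m G])))
      then prod_list (map w (P' @ [drop m G])) else 0))"
    unfolding f_def by (rule sum_parts_last)
  also have "\<dots> = (\<Sum>m<length G. g (take m G) * w (drop m G) * (if odd (oc (drop m G)) then 1 else 0))"
    unfolding g_def sum_distrib_right
    by (intro sum.cong refl) (simp add: odd_sum_list_iff)
  finally show ?thesis .
qed


lemma neg1_pow_diff: "m \<le> n \<Longrightarrow> (-1::complex) ^ (n - m) = (-1) ^ n * (-1) ^ m"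
proof -
  assume "m \<le> n"
  hence "(-1::complex) ^ n = (-1) ^ (n - m) * (-1) ^ m" by (metis le_add_diff_inverse2 power_add)
  hence "(-1::complex) ^ n * (-1) ^ m = (-1) ^ (n - m) * ((-1) ^ m * (-1) ^ m)" by simp
  also have "(-1::complex) ^ m * (-1) ^ m = 1" by (simp flip: power_add)
  finally show ?thesis by simp
qed

lemma I1: "q \<ge> 1 \<Longrightarrow> (\<Sum>t\<le>q. (-1::complex) ^ t / (fact t * fact (q - t))) = 0"
proof -
  assume q: "q \<ge> 1"
  have "(\<Sum>t\<le>q. (-1::complex) ^ t / (fact t * fact (q - t))) = 
        (\<Sum>t\<le>q. (-1) ^ t * of_nat (q choose t)) / fact q"
    by (simp add: sum_divide_distrib binomial_fact field_simps)
  also have "\<dots> = 0" using choose_alternating_sum[of q] q by simp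
  finally show ?thesis .
qed

lemma I1_lt: "q \<ge> 1 \<Longrightarrow> (\<Sum>t<q. (-1::complex) ^ t / (fact t * fact (q - t))) = - ((-1) ^ q / fact q)"
proof -
  assume q: "q \<ge> 1"
  have "(\<Sum>t\<le>q. (-1::complex) ^ t / (fact t * fact (q - t))) =
    (\<Sum>t<q. (-1::complex) ^ t / (fact t * fact (q - t))) + (-1) ^ q / fact q"
    by (simp add: lessThan_Suc_atMost[symmetric])
  thus ?thesis using I1[OF q] by (simp add: add_eq_0_iff)
qed

lemma I2: "n \<ge> 1 \<Longrightarrow> (\<Sum>m<n. (-1::complex) ^ (n - m + 1) / (fact m * fact (n - m))) = 1 / fact n"
proof -
  assume n: "n \<ge> 1"
  have "(\<Sum>m<n. (-1::complex) ^ (n - m + 1) / (fact m * fact (n - m))) =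
        (-1::complex) ^ Suc n * (\<Sum>m<n. (-1::complex) ^ m / (fact m * fact (n - m)))"
    by (simp add: sum_distrib_left neg1_pow_diff)
  also have "\<dots> = 1 / fact n" using I1_lt[OF n]
    by (simp add: minus_one_power_iff)
  finally show ?thesis .
qed

lemma I4: "n \<ge> 1 \<Longrightarrow> (\<Sum>m<n. (-1::complex) ^ (n - m + 1) * (if odd (n - m) then 1 else 0) / (fact m * fact (n - m))) 
   = 2 ^ (n - 1) / fact n"
proof -
  assume n: "n \<ge> 1"
  have "(\<Sum>m<n. (-1::complex) ^ (n - m + 1) * (if odd (n - m) then 1 else 0) / (fact m * fact (n - m)))
      = (\<Sum>m\<le>n. (if odd (n - m) then 1 else 0) / (fact m * fact (n - m)))"
    by (simp add: lessThan_Suc_atMost[symmetric]) (rule sum.cong, auto simp: minus_one_power_iff)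
  also have "\<dots> = (\<Sum>k\<le>n. (if odd k then 1 else 0) / (fact (n - k) * fact k))"
    using sum.atLeastAtMost_rev[of "\<lambda>m. (if odd (n - m) then 1 else 0) / (fact m * fact (n - m) :: complex)" 0 n]
    by (simp add: atLeast0AtMost mult.commute)
  also have "\<dots> = (\<Sum>k\<le>n. if odd k then of_nat (n choose k) else 0) / fact n"
    unfolding sum_divide_distrib by (rule sum.cong) (auto simp: binomial_fact field_simps)
  also have "\<dots> = 2 ^ (n - 1) / fact n"
  proof -
    have "2 * (\<Sum>k\<le>n. if odd k then of_nat (n choose k) else 0) = (2 ^ n :: complex)"
      using choose_odd_sum[of n] n by simp
    moreover have "(2::complex) ^ n = 2 * 2 ^ (n - 1)" using n by (cases n) auto
    ultimately show ?thesis by simp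
  qed
  finally show ?thesis .
qed


lemma w_nonzero_okb: "w V \<noteq> 0 \<Longrightarrow> okb V" by (auto simp: w_def u_def split: if_splits)
lemma cfg_nonzero_OE: "cfg V \<noteq> 0 \<Longrightarrow> OE V" by (auto simp: cfg_def split: if_splits)

lemma terms_notshape:
  assumes "\<not> shape G"
  shows "(\<Sum>m<length G. cfg (take m G) * w (drop m G) * \<rho> (oc (drop m G))) = 0"
proof (rule sum.neutral, rule ballI)
  fix m assume "m \<in> {..<length G}"
  show "cfg (take m G) * w (drop m G) * \<rho> (oc (drop m G)) = 0"
  proof (rule ccontr)
    assume "cfg (take m G) * w (drop m G) * \<rho> (oc (drop m G)) \<noteq> 0"
    hence "OE (take m G)" "EO (drop m G)" using cfg_nonzero_OE w_nonzero_okb okb_EO by auto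
    hence "shape (take m G @ drop m G)" by (rule OE_EO_shape)
    thus False using assms by simp
  qed
qed

lemma OE_all_odd: "\<forall>x\<in>set A. odd x \<Longrightarrow> OE A"
  unfolding OE_def by (rule exI[of _ A], rule exI[of _ "[]"]) simp

lemma EO_all_odd: "\<forall>x\<in>set A. odd x \<Longrightarrow> EO A"
  unfolding EO_def by (rule exI[of _ "[]"], rule exI[of _ A]) simp

lemma terms_allodd:
  assumes "\<forall>x\<in>set G. odd x"
  shows "(\<Sum>m<length G. cfg (take m G) * w (drop m G) * \<rho> (oc (drop m G))) =
     (\<Sum>m<length G. (-1::complex) ^ (length G - m + 1) * \<rho> (length G - m) / (fact m * fact (length G - m)))"
proof (rule sum.cong[OF refl])
  fix m assume m: "m \<in> {..<length G}"
  have t: "\<forall>x\<in>set (take m G). odd x" and d: "\<forall>x\<in>set (drop m G). odd x"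
    using assms by (auto dest: in_set_takeD in_set_dropD)
  have "cfg (take m G) = 1 / fact m"
    using cfg_OE[OF OE_all_odd[OF t]] oc_all_odd[OF t] ec_all_odd[OF t] m by simp
  moreover have "w (drop m G) = (-1) ^ (length G - m + 1) / fact (length G - m)"
    using w_EO[OF EO_all_odd[OF d]] oc_all_odd[OF d] ec_all_odd[OF d] by simp
  moreover have "oc (drop m G) = length G - m" using oc_all_odd[OF d] by simp
  ultimately show "cfg (take m G) * w (drop m G) * \<rho> (oc (drop m G)) =
    (-1::complex) ^ (length G - m + 1) * \<rho> (length G - m) / (fact m * fact (length G - m))"
    by simp
qed

lemma terms_shape:
  assumes G: "G = X @ Y @ Z" and X: "\<forall>x\<in>set X. odd x" and Y: "\<forall>x\<in>set Y. even x"
    and Z: "\<forall>x\<in>set Z. odd x" and Yne: "Y \<noteq> []"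
  shows "(\<Sum>m<length G. cfg (take m G) * w (drop m G) * \<rho> (oc (drop m G))) =
    (\<Sum>t<min (Suc (length Y)) (length G - length X).
       (-1) ^ t / (fact (length X) * fact t) * ((-1) ^ (length Z + 1) / (fact (length Z) * fact (length Y - t))) * \<rho> (length Z))"
proof -
  define p q r where "p = length X" "q = length Y" "r = length Z"
  define K where "K = min (Suc q) (length G - p)"
  define H where "H m = cfg (take m G) * w (drop m G) * \<rho> (oc (drop m G))" for m
  have n: "length G = p + q + r" using G p_q_r_def by simp
  have q1: "q \<ge> 1" using Yne p_q_r_def by (simp add: Suc_le_eq)
  have H1: "H m = 0" if "m < p" for m
  proof -
    have dm: "drop m G = drop m X @ Y @ Z" using G that p_q_r_def by simp
    have "p - m \<in> OtE (drop m G)"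
    proof -
      have l: "length (drop m X) = p - m" using p_q_r_def by simp
      have i: "p - m - 1 < length (drop m X)" using l that by simp
      have "drop m G ! (p - m - 1) = drop m X ! (p - m - 1)" unfolding dm by (rule nth_append_left[OF i])
      also have "\<dots> = X ! (m + (p - m - 1))" using that p_q_r_def by simp
      also have "m + (p - m - 1) = p - 1" using that by simp
      finally have "drop m G ! (p - m - 1) = X ! (p - 1)" .
      moreover have "X ! (p - 1) \<in> set X" using that p_q_r_def by simp
      moreover have "drop m G ! (p - m) = Y ! 0" using dm l Yne by (simp add: nth_append)
      moreover have "Y ! 0 \<in> set Y" using Yne by simp
      moreover have "p - m < length (drop m G)" using n that q1 by simp
      ultimately show ?thesis using that X Y by (auto simp: OtE_def)
    qed
    hence "\<not> okb (drop m G)" by (auto simp: okb_def)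
    thus ?thesis by (auto simp: H_def w_def u_def)
  qed
  have H2: "H m = 0" if "p + q < m" "m < length G" for m
  proof -
    have tm: "take m G = X @ Y @ take (m - p - q) Z" using G that p_q_r_def by simp
    have "m - p - q > 0" "Z \<noteq> []" using that n p_q_r_def by auto
    hence ne: "take (m - p - q) Z \<noteq> []" by simp
    hence "last (take (m - p - q) Z) \<in> set (take (m - p - q) Z)" by (rule last_in_set)
    moreover have "last (take m G) = last (take (m - p - q) Z)" using tm ne by simp
    moreover have "set (take (m - p - q) Z) \<subseteq> set Z" by (rule set_take_subset)
    ultimately have "last (take m G) \<in> set Z" by auto
    hence "odd (last (take m G))" using Z by auto
    moreover have "Y ! 0 \<in> set (take m G)" "even (Y ! 0)" using tm Yne Y by auto
    ultimately have "\<not> OE (take m G)"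
    proof (intro notI)
      assume "odd (last (take m G))" "Y ! 0 \<in> set (take m G)" "even (Y ! 0)" "OE (take m G)"
      moreover have "take m G \<noteq> []" using tm Yne by simp
      ultimately show False using OE_last_odd[of "take m G"] by blast
    qed
    thus ?thesis by (auto simp: H_def cfg_def)
  qed
  have H3: "H (p + t) = (-1) ^ t / (fact p * fact t) * ((-1) ^ (r + 1) / (fact r * fact (q - t))) * \<rho> r"
    if "t \<le> q" for t
  proof -
    have tm: "take (p + t) G = X @ take t Y" using G that p_q_r_def by simp
    have dm: "drop (p + t) G = drop t Y @ Z" using G that p_q_r_def by simp
    have Yt: "\<forall>x\<in>set (take t Y). even x" "\<forall>x\<in>set (drop t Y). even x"
      using Y by (auto dest: in_set_takeD in_set_dropD)
    have OE: "OE (take (p + t) G)" unfolding tm OE_def using X Yt by blast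
    have EO: "EO (drop (p + t) G)" unfolding dm EO_def using Z Yt by blast
    have c1: "oc (take (p + t) G) = p" "ec (take (p + t) G) = t"
      using tm oc_all_odd[OF X] ec_all_odd[OF X] oc_all_even[OF Yt(1)] ec_all_even[OF Yt(1)] that p_q_r_def
      by auto
    have c2: "oc (drop (p + t) G) = r" "ec (drop (p + t) G) = q - t"
      using dm oc_all_odd[OF Z] ec_all_odd[OF Z] oc_all_even[OF Yt(2)] ec_all_even[OF Yt(2)] that p_q_r_def
      by auto
    show ?thesis unfolding H_def cfg_OE[OF OE] w_EO[OF EO] c1 c2 by simp
  qed
  have "(\<Sum>m<length G. H m) = (\<Sum>m\<in>{p..<p+K}. H m)"
  proof (rule sum.mono_neutral_right)
    show "{p..<p+K} \<subseteq> {..<length G}" using n K_def by auto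
    show "\<forall>i\<in>{..<length G} - {p..<p + K}. H i = 0"
    proof
      fix i assume i: "i \<in> {..<length G} - {p..<p + K}"
      show "H i = 0"
      proof (cases "i < p")
        case True thus ?thesis by (rule H1)
      next
        case False
        hence "p + q < i" using i K_def n by auto
        thus ?thesis using H2 i by auto
      qed
    qed
  qed simp
  also have "\<dots> = (\<Sum>t<K. H (p + t))"
    using sum.shift_bounds_nat_ivl[of H 0 p K] by (simp add: atLeast0LessThan add.commute)
  also have "\<dots> = (\<Sum>t<K. (-1) ^ t / (fact p * fact t) * ((-1) ^ (r + 1) / (fact r * fact (q - t))) * \<rho> r)"
    by (rule sum.cong[OF refl], rule H3) (auto simp: K_def)
  finally show ?thesis unfolding H_def K_def p_q_r_def .
qed

theorem g_cf: "g G = cfg G"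
proof (induction "length G" arbitrary: G rule: less_induct)
  case less
  show ?case
  proof (cases "G = []")
    case True thus ?thesis by (simp add: g_Nil cfg_def OE_def oc_def ec_def)
  next
    case Gne: False
    have "g G = (\<Sum>m<length G. cfg (take m G) * w (drop m G) * (\<lambda>_. 1) (oc (drop m G)))"
      using g_rec[OF Gne] less Gne by (auto intro!: sum.cong)
    also have "\<dots> = cfg G"
    proof (cases "shape G")
      case False
      hence "cfg G = 0" using OE_shape by (auto simp: cfg_def)
      thus ?thesis using terms_notshape[OF False, of "\<lambda>_. 1"] by simp
    next
      case sh: True
      show ?thesis
      proof (cases "\<forall>x\<in>set G. odd x")
        case True
        have n1: "length G \<ge> 1" using Gne by (simp add: Suc_le_eq)
        show ?thesis unfolding terms_allodd[OF True, of "\<lambda>_. 1"] using I2[OF n1]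
          cfg_OE[OF OE_all_odd[OF True]] oc_all_odd[OF True] ec_all_odd[OF True] by simp
      next
        case nao: False
        from sh obtain X Y Z where XYZ: "G = X @ Y @ Z" "\<forall>x\<in>set X. odd x" "\<forall>x\<in>set Y. even x"
          "\<forall>x\<in>set Z. odd x" unfolding shape_def by blast
        have Yne: "Y \<noteq> []" using XYZ nao by auto
        have q1: "length Y \<ge> 1" using Yne by (simp add: Suc_le_eq)
        show ?thesis
        proof (cases "Z = []")
          case True
          have K: "min (Suc (length Y)) (length G - length X) = length Y" using XYZ True by simp
          have "OE G" unfolding OE_def using XYZ True by auto
          hence "cfg G = (-1) ^ length Y / (fact (length X) * fact (length Y))"
            using cfg_OE[of G] XYZ True oc_all_odd[OF XYZ(2)] ec_all_odd[OF XYZ(2)]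
              oc_all_even[OF XYZ(3)] ec_all_even[OF XYZ(3)] by simp
          moreover have "(\<Sum>t<length Y. (-1) ^ t / (fact (length X) * fact t) * ((-1) ^ (0 + 1) / (fact 0 * fact (length Y - t))) * (1::complex))
             = - (1 / fact (length X)) * (\<Sum>t<length Y. (-1) ^ t / (fact t * fact (length Y - t)))"
            by (simp add: sum_distrib_left field_simps)
          ultimately show ?thesis unfolding terms_shape[OF XYZ Yne, of "\<lambda>_. 1"] K using True I1_lt[OF q1] by simp
        next
          case False
          have "length Z \<ge> 1" using False by (simp add: Suc_le_eq)
          hence K: "min (Suc (length Y)) (length G - length X) = Suc (length Y)" using XYZ by simp
          have "\<not> OE G"
          proof
            assume "OE G"
            moreover have "odd (last G)" using XYZ False by simp
            ultimately have "\<forall>x\<in>set G. odd x" using OE_last_odd Gne by blast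
            thus False using nao by blast
          qed
          hence "cfg G = 0" by (simp add: cfg_def)
          moreover have "(\<Sum>t<Suc (length Y). (-1) ^ t / (fact (length X) * fact t) * ((-1) ^ (length Z + 1) / (fact (length Z) * fact (length Y - t))) * (1::complex))
             = (-1) ^ (length Z + 1) / (fact (length X) * fact (length Z)) * (\<Sum>t\<le>length Y. (-1) ^ t / (fact t * fact (length Y - t)))"
            by (simp add: sum_distrib_left field_simps lessThan_Suc_atMost)
          ultimately show ?thesis unfolding terms_shape[OF XYZ Yne, of "\<lambda>_. 1"] K using I1[OF q1] by simp
        qed
      qed
    qed
    finally show ?thesis .
  qed
qed

theorem f_cf: "f G = (if G \<noteq> [] \<and> (\<forall>x\<in>set G. odd x) then 2 ^ (length G - 1) / fact (length G) else 0)"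
proof -
  define \<rho> :: "nat \<Rightarrow> complex" where "\<rho> k = (if odd k then 1 else 0)" for k
  have "f G = (\<Sum>m<length G. cfg (take m G) * w (drop m G) * \<rho> (oc (drop m G)))"
    unfolding f_rec g_cf \<rho>_def ..
  also have "\<dots> = (if G \<noteq> [] \<and> (\<forall>x\<in>set G. odd x) then 2 ^ (length G - 1) / fact (length G) else 0)"
  proof (cases "G = []")
    case True thus ?thesis by simp
  next
    case Gne: False
    show ?thesis
    proof (cases "shape G")
      case False
      moreover have "\<not> (\<forall>x\<in>set G. odd x)" using False unfolding shape_def
        by (metis append.left_neutral empty_iff list.set(1))
      ultimately show ?thesis using terms_notshape[OF False] by simp
    next
      case sh: True
      show ?thesis
      proof (cases "\<forall>x\<in>set G. odd x")
        case True
        have n1: "length G \<ge> 1" using Gne by (simp add: Suc_le_eq)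
        show ?thesis unfolding terms_allodd[OF True] using I4[OF n1] True Gne by (simp add: \<rho>_def)
      next
        case nao: False
        from sh obtain X Y Z where XYZ: "G = X @ Y @ Z" "\<forall>x\<in>set X. odd x" "\<forall>x\<in>set Y. even x"
          "\<forall>x\<in>set Z. odd x" unfolding shape_def by blast
        have Yne: "Y \<noteq> []" using XYZ nao by auto
        have q1: "length Y \<ge> 1" using Yne by (simp add: Suc_le_eq)
        show ?thesis
        proof (cases "Z = []")
          case True
          thus ?thesis unfolding terms_shape[OF XYZ Yne] using nao by (simp add: \<rho>_def)
        next
          case False
          have "length Z \<ge> 1" using False by (simp add: Suc_le_eq)
          hence K: "min (Suc (length Y)) (length G - length X) = Suc (length Y)" using XYZ by simp
          have "(\<Sum>t<Suc (length Y). (-1) ^ t / (fact (length X) * fact t) * ((-1) ^ (length Z + 1) / (fact (length Z) * fact (length Y - t))) * \<rho> (length Z))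
             = (-1) ^ (length Z + 1) * \<rho> (length Z) / (fact (length X) * fact (length Z)) * (\<Sum>t\<le>length Y. (-1) ^ t / (fact t * fact (length Y - t)))"
            by (simp add: sum_distrib_left field_simps lessThan_Suc_atMost)
          thus ?thesis unfolding terms_shape[OF XYZ Yne] K using I1[OF q1] nao by simp
        qed
      qed
    qed
  qed
  finally show ?thesis .
qed


lemma subsets1: "{I. I \<subseteq> {..<1::nat} \<and> card I = k} = (if k = 0 then {{}} else if k = 1 then {{0}} else {})"
proof (rule set_eqI)
  fix I :: "nat set"
  have sub: "{..<1::nat} = {0}" by auto
  show "I \<in> {I. I \<subseteq> {..<1::nat} \<and> card I = k} \<longleftrightarrow> I \<in> (if k = 0 then {{}} else if k = 1 then {{0}} else {})"
  proof
    assume "I \<in> {I. I \<subseteq> {..<1::nat} \<and> card I = k}"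
    hence a: "I \<subseteq> {0}" "card I = k" unfolding sub by simp_all
    from a(1) have "I = {} \<or> I = {0}" by (rule subset_singletonD)
    thus "I \<in> (if k = 0 then {{}} else if k = 1 then {{0}} else {})"
    proof
      assume "I = {}" thus ?thesis using a(2) by simp
    next
      assume "I = {0}" thus ?thesis using a(2) by simp
    qed
  next
    assume "I \<in> (if k = 0 then {{}} else if k = 1 then {{0}} else {})"
    thus "I \<in> {I. I \<subseteq> {..<1::nat} \<and> card I = k}" unfolding sub by (simp split: if_splits)
  qed
qed

lemma zetaQ_eq: "zetaQ a = (if length a \<le> 1 then 1 else 0)"
proof -
  have "length a = 0 \<or> length a = 1 \<or> length a \<ge> 2" by linarith
  thus ?thesis
  proof (elim disjE)
    assume "length a = 1"
    thus ?thesis unfolding zetaQ_def M_eval_def subsets1 by simp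
  next
    assume "length a = 0"
    thus ?thesis unfolding zetaQ_def M_eval_def subsets1 by simp
  next
    assume "length a \<ge> 2"
    hence "length a \<noteq> 0" "length a \<noteq> 1" "\<not> length a \<le> 1" by auto
    thus ?thesis unfolding zetaQ_def M_eval_def subsets1 by simp
  qed
qed

lemma conv_zetaQ_right: "conv psi zetaQ a = psi a + (if a = [] then 0 else psi (butlast a))"
proof (cases a rule: rev_cases)
  case Nil thus ?thesis by (simp add: conv_def zetaQ_eq)
next
  case (snoc b l)
  define k where "k = length b"
  have len: "length a = Suc k" using snoc k_def by simp
  have "conv psi zetaQ a = (\<Sum>i\<le>Suc k. psi (take i a) * zetaQ (drop i a))" by (simp add: conv_def len)
  also have "\<dots> = psi (take (Suc k) a) * zetaQ (drop (Suc k) a) + psi (take k a) * zetaQ (drop k a)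
       + (\<Sum>i<k. psi (take i a) * zetaQ (drop i a))"
    by (simp add: lessThan_Suc_atMost[symmetric] add.assoc)
  also have "(\<Sum>i<k. psi (take i a) * zetaQ (drop i a)) = 0"
    by (rule sum.neutral) (auto simp: zetaQ_eq len)
  also have "psi (take (Suc k) a) * zetaQ (drop (Suc k) a) = psi a" using len by (simp add: zetaQ_eq)
  also have "psi (take k a) * zetaQ (drop k a) = psi (butlast a)" using len
    by (simp add: zetaQ_eq butlast_conv_take)
  finally show ?thesis using snoc by simp
qed

lemma conv_zetaQ_left: "conv zetaQ psi a = psi a + (if a = [] then 0 else psi (tl a))"
proof (cases a)
  case Nil thus ?thesis by (simp add: conv_def zetaQ_eq)
next
  case (Cons x b)
  define k where "k = length b"
  have len: "length a = Suc k" using Cons k_def by simp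
  have "conv zetaQ psi a = (\<Sum>i\<le>Suc k. zetaQ (take i a) * psi (drop i a))" by (simp add: conv_def len)
  also have "\<dots> = (\<Sum>i\<le>1. zetaQ (take i a) * psi (drop i a))"
    by (rule sum.mono_neutral_right) (auto simp: zetaQ_eq len)
  also have "\<dots> = psi a + psi (tl a)" by (simp add: zetaQ_eq Cons)
  finally show ?thesis using Cons by simp
qed

lemma is_comp_take: "is_comp a \<Longrightarrow> is_comp (take k a)" by (auto simp: is_comp_def dest: in_set_takeD)
lemma is_comp_drop: "is_comp a \<Longrightarrow> is_comp (drop k a)" by (auto simp: is_comp_def dest: in_set_dropD)
lemma is_comp_butlast: "is_comp a \<Longrightarrow> is_comp (butlast a)" by (simp add: butlast_conv_take is_comp_take)
lemma is_comp_tl: "is_comp a \<Longrightarrow> is_comp (tl a)" by (cases a) (auto simp: is_comp_def)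
lemma is_comp_append: "is_comp (a @ b) \<longleftrightarrow> is_comp a \<and> is_comp b" by (auto simp: is_comp_def)
lemma is_comp_Nil[simp]: "is_comp []" by (simp add: is_comp_def)

definition chi0 :: "nat list \<Rightarrow> complex" where
  "chi0 a = (if is_comp a then (-1) ^ length a else 0)"

lemma zeta_inv_eq: "zeta_inv = chi0"
  unfolding zeta_inv_def
proof (rule the_equality)
  show "(\<forall>a. \<not> is_comp a \<longrightarrow> chi0 a = 0) \<and>
        (\<forall>a. is_comp a \<longrightarrow> conv chi0 zetaQ a = eps a \<and> conv zetaQ chi0 a = eps a)"
  proof (intro conjI allI impI)
    fix a assume "is_comp a"
    show "conv chi0 zetaQ a = eps a"
    proof (cases a rule: rev_cases)
      case Nil thus ?thesis by (simp add: conv_zetaQ_right eps_def chi0_def)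
    next
      case (snoc b l)
      hence "is_comp b" using \<open>is_comp a\<close> by (simp add: is_comp_append)
      thus ?thesis using snoc \<open>is_comp a\<close> by (simp add: conv_zetaQ_right eps_def chi0_def)
    qed
    show "conv zetaQ chi0 a = eps a"
    proof (cases a)
      case Nil thus ?thesis by (simp add: conv_zetaQ_left eps_def chi0_def)
    next
      case (Cons l b)
      hence "is_comp b" using \<open>is_comp a\<close> by (simp add: is_comp_def)
      thus ?thesis using Cons \<open>is_comp a\<close> by (simp add: conv_zetaQ_left eps_def chi0_def)
    qed
  qed (simp add: chi0_def)
next
  fix chi assume H: "(\<forall>a. \<not> is_comp a \<longrightarrow> chi a = 0) \<and>
        (\<forall>a. is_comp a \<longrightarrow> conv chi zetaQ a = eps a \<and> conv zetaQ chi a = eps a)"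
  show "chi = chi0"
  proof
    fix a show "chi a = chi0 a"
    proof (induction "length a" arbitrary: a rule: less_induct)
      case less
      show ?case
      proof (cases "is_comp a")
        case False thus ?thesis using H by (simp add: chi0_def)
      next
        case True
        hence e: "chi a + (if a = [] then 0 else chi (butlast a)) = eps a"
          using H conv_zetaQ_right[of chi a] by simp
        show ?thesis
        proof (cases "a = []")
          case True thus ?thesis using e by (simp add: eps_def chi0_def)
        next
          case False
          have "chi (butlast a) = chi0 (butlast a)" using less False by simp
          moreover have "chi a = eps a - chi (butlast a)" using e False by (simp add: eq_diff_eq)
          moreover obtain b l where "a = b @ [l]" using False by (cases a rule: rev_cases) auto
          ultimately show ?thesis using True is_comp_butlast[OF True]
            by (simp add: eps_def chi0_def)
        qed
      qed
    qed
  qed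
qed

definition phiE :: "nat list \<Rightarrow> complex" where
  "phiE a = (if odd (last a) then 2 * (-1) ^ (sum_list a + length a) else 0)"

lemma phi_eq: 
  assumes "is_comp a" "a \<noteq> []"
  shows "conv (cbar zeta_inv) zetaQ a = phiE a"
proof -
  obtain b l where a: "a = b @ [l]" using assms(2) by (cases a rule: rev_cases) auto
  have cb: "is_comp b" using assms(1) a by (simp add: is_comp_append)
  define A where "A = (-1::complex) ^ sum_list b"
  define B where "B = (-1::complex) ^ length b"
  have "conv (cbar zeta_inv) zetaQ a = (-1) ^ sum_list a * (-1) ^ length a + (-1) ^ sum_list b * (-1) ^ length b"
    using assms cb a by (simp add: conv_zetaQ_right cbar_def zeta_inv_eq chi0_def)
  also have "\<dots> = - (A * (-1) ^ l * B) + A * B"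
    using a by (simp add: A_def B_def power_add)
  also have "\<dots> = phiE a"
  proof (cases "odd l")
    case True
    hence "(-1::complex) ^ l = -1" by simp
    thus ?thesis using a True by (simp add: phiE_def A_def B_def power_add)
  next
    case False
    hence "(-1::complex) ^ l = 1" by simp
    thus ?thesis using a False by (simp add: phiE_def)
  qed
  finally show ?thesis .
qed


fun thM :: "nat list \<Rightarrow> nat list \<Rightarrow> complex" where
  "thM \<beta> [] = (if \<beta> = [] then 1 else 0)"
| "thM \<beta> (x # b) = (\<Sum>k\<in>{1..length \<beta>}. (if sum_list (take k \<beta>) = x then phiE (take k \<beta>) else 0) * thM (drop k \<beta>) b)"

lemma qsym_M: "is_comp a \<Longrightarrow> qsym (M a)"
proof -
  assume a: "is_comp a"
  have "{b. M a b \<noteq> 0} = {a}" by (auto simp: M_def)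
  thus ?thesis using a by (auto simp: qsym_def M_def split: if_splits)
qed

lemma M_apply: "M a b = (if b = a then 1 else 0)" by (simp add: M_def)

lemma Theta_facts:
  assumes "is_Theta T"
  shows "\<And>f. qsym f \<Longrightarrow> qsym (T f)"
    and "\<And>f g (x::complex) y. qsym f \<Longrightarrow> qsym g \<Longrightarrow> T (\<lambda>b. x * f b + y * g b) = (\<lambda>b. x * T f b + y * T g b)"
    and "\<And>a b. is_comp a \<Longrightarrow> T (M a) b \<noteq> 0 \<Longrightarrow> sum_list b = sum_list a"
    and "T (M []) = M []"
    and "\<And>f. qsym f \<Longrightarrow> coprod (T f) = tensor_map T (coprod f)"
    and "\<And>f. qsym f \<Longrightarrow> counit (T f) = counit f"
    and "\<And>a. is_comp a \<Longrightarrow> lin_ext zetaQ (T (M a)) = conv (cbar zeta_inv) zetaQ a"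
  using assms unfolding is_Theta_def graded_hopf_morphism_def by blast+

lemma sum_pos: "is_comp c \<Longrightarrow> c \<noteq> [] \<Longrightarrow> sum_list c > 0"
  by (cases c) (auto simp: is_comp_def)

lemma TM_Nil:
  assumes T: "is_Theta T" and c: "is_comp \<beta>"
  shows "T (M \<beta>) [] = (if \<beta> = [] then 1 else 0)"
  using Theta_facts(6)[OF T qsym_M[OF c]] by (auto simp: counit_def M_def)

lemma TM_single:
  assumes T: "is_Theta T" and c: "is_comp c" and ne: "c \<noteq> []"
  shows "T (M c) [x] = (if x = sum_list c then phiE c else 0)"
proof -
  define F where "F = T (M c)"
  define S where "S = {b. F b \<noteq> 0}"
  have q: "qsym F" unfolding F_def by (rule Theta_facts(1)[OF T qsym_M[OF c]])
  hence fin: "finite S" unfolding S_def qsym_def by simp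
  have deg: "F b \<noteq> 0 \<Longrightarrow> sum_list b = sum_list c" for b
    unfolding F_def by (rule Theta_facts(3)[OF T c])
  have sp: "sum_list c > 0" by (rule sum_pos[OF c ne])
  have "phiE c = lin_ext zetaQ F" unfolding F_def using Theta_facts(7)[OF T c] phi_eq[OF c ne] by simp
  also have "\<dots> = (\<Sum>b\<in>S. F b * zetaQ b)" by (simp add: lin_ext_def S_def)
  also have "\<dots> = (\<Sum>b\<in>S. if b = [sum_list c] then F b else 0)"
  proof (rule sum.cong[OF refl])
    fix b assume b: "b \<in> S"
    hence Fb: "F b \<noteq> 0" by (simp add: S_def)
    show "F b * zetaQ b = (if b = [sum_list c] then F b else 0)"
    proof (cases "b = [sum_list c]")
      case True thus ?thesis by (simp add: zetaQ_eq)
    next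
      case False
      have "\<not> length b \<le> 1"
      proof
        assume "length b \<le> 1"
        hence "b = [] \<or> (\<exists>y. b = [y])" by (cases b) auto
        moreover have "sum_list b = sum_list c" by (rule deg[OF Fb])
        ultimately show False
        proof (elim disjE exE)
          assume "b = []" "sum_list b = sum_list c"
          hence "sum_list c = 0" by (simp del: sum_list_eq_0_iff)
          thus False using sp by (simp del: sum_list_eq_0_iff)
        next
          fix y assume "b = [y]" "sum_list b = sum_list c" thus False using False by simp
        qed
      qed
      thus ?thesis using False by (simp add: zetaQ_eq)
    qed
  qed
  also have "\<dots> = (if [sum_list c] \<in> S then F [sum_list c] else 0)"
    using sum.delta[OF fin, of "[sum_list c]" F] by (simp add: eq_commute)
  also have "\<dots> = F [sum_list c]" by (auto simp: S_def)
  finally have 1: "F [sum_list c] = phiE c" ..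
  show ?thesis
  proof (cases "x = sum_list c")
    case True thus ?thesis using 1 by (simp add: F_def)
  next
    case False
    hence "F [x] = 0" using deg[of "[x]"] by auto
    thus ?thesis using False by (simp add: F_def)
  qed
qed

lemma TM_thM:
  assumes T: "is_Theta T"
  shows "is_comp \<beta> \<Longrightarrow> T (M \<beta>) b = thM \<beta> b"
proof (induction b arbitrary: \<beta>)
  case Nil thus ?case using TM_Nil[OF T Nil.prems] by simp
next
  case (Cons x b)
  have "T (M \<beta>) (x # b) = coprod (T (M \<beta>)) ([x], b)" by (simp add: coprod_def)
  also have "\<dots> = tensor_map T (coprod (M \<beta>)) ([x], b)"
    using Theta_facts(5)[OF T qsym_M[OF Cons.prems]] by simp
  also have "\<dots> = (\<Sum>p\<in>{p. fst p @ snd p = \<beta>}. T (M (fst p)) [x] * T (M (snd p)) b)"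
    unfolding tensor_map_def coprod_def by (simp add: M_apply case_prod_beta)
  also have "{p. fst p @ snd p = \<beta>} = (\<lambda>k. (take k \<beta>, drop k \<beta>)) ` {..length \<beta>}"
  proof (rule set_eqI)
    fix p :: "nat list \<times> nat list"
    show "p \<in> {p. fst p @ snd p = \<beta>} \<longleftrightarrow> p \<in> (\<lambda>k. (take k \<beta>, drop k \<beta>)) ` {..length \<beta>}"
    proof
      assume "p \<in> {p. fst p @ snd p = \<beta>}"
      hence "p = (take (length (fst p)) \<beta>, drop (length (fst p)) \<beta>)" "length (fst p) \<le> length \<beta>"
        by (auto simp: prod_eq_iff)
      thus "p \<in> (\<lambda>k. (take k \<beta>, drop k \<beta>)) ` {..length \<beta>}" by blast
    qed auto
  qed
  also have "(\<Sum>p\<in>(\<lambda>k. (take k \<beta>, drop k \<beta>)) ` {..length \<beta>}. T (M (fst p)) [x] * T (M (snd p)) b)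
     = (\<Sum>k\<le>length \<beta>. T (M (take k \<beta>)) [x] * T (M (drop k \<beta>)) b)"
  proof (subst sum.reindex)
    show "inj_on (\<lambda>k. (take k \<beta>, drop k \<beta>)) {..length \<beta>}"
    proof (rule inj_onI)
      fix i j assume "i \<in> {..length \<beta>}" "j \<in> {..length \<beta>}" "(take i \<beta>, drop i \<beta>) = (take j \<beta>, drop j \<beta>)"
      hence "length (take i \<beta>) = length (take j \<beta>)" "i \<le> length \<beta>" "j \<le> length \<beta>" by auto
      thus "i = j" by (auto simp: min_def split: if_splits)
    qed
  qed simp
  also have "\<dots> = (\<Sum>k\<in>{1..length \<beta>}. T (M (take k \<beta>)) [x] * T (M (drop k \<beta>)) b)"
  proof (rule sum.mono_neutral_right)
    show "\<forall>i\<in>{..length \<beta>} - {1..length \<beta>}. T (M (take i \<beta>)) [x] * T (M (drop i \<beta>)) b = 0"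
    proof
      fix i assume "i \<in> {..length \<beta>} - {1..length \<beta>}"
      hence "i = 0" by auto
      thus "T (M (take i \<beta>)) [x] * T (M (drop i \<beta>)) b = 0"
        using Theta_facts(4)[OF T] by (simp add: M_apply)
    qed
  qed auto
  also have "\<dots> = thM \<beta> (x # b)"
  proof -
    have eq: "T (M (take k \<beta>)) [x] * T (M (drop k \<beta>)) b =
       (if sum_list (take k \<beta>) = x then phiE (take k \<beta>) else 0) * thM (drop k \<beta>) b"
      if k: "k \<in> {1..length \<beta>}" for k
    proof -
      have "take k \<beta> \<noteq> []" using k by auto
      hence "T (M (take k \<beta>)) [x] = (if sum_list (take k \<beta>) = x then phiE (take k \<beta>) else 0)"
        using TM_single[OF T is_comp_take[OF Cons.prems], of k x] by (cases "sum_list (take k \<beta>) = x") auto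
      moreover have "T (M (drop k \<beta>)) b = thM (drop k \<beta>) b"
        by (rule Cons.IH[OF is_comp_drop[OF Cons.prems]])
      ultimately show ?thesis by simp
    qed
    show ?thesis unfolding thM.simps(2) by (rule sum.cong[OF refl], rule eq)
  qed
  finally show ?case .
qed

lemma qsym_sum:
  assumes "finite A" "\<forall>\<beta>\<in>A. is_comp \<beta>"
  shows "qsym (\<lambda>b. \<Sum>\<beta>\<in>A. c \<beta> * M \<beta> b)"
proof -
  have z: "(\<Sum>\<beta>\<in>A. c \<beta> * M \<beta> b) = 0" if "b \<notin> A" for b
    by (rule sum.neutral) (use that in \<open>auto simp: M_apply\<close>)
  hence "{b. (\<Sum>\<beta>\<in>A. c \<beta> * M \<beta> b) \<noteq> 0} \<subseteq> A" by blast
  thus ?thesis unfolding qsym_def using assms finite_subset by blast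
qed

lemma T_lin_sum:
  assumes T: "is_Theta T"
  shows "finite A \<Longrightarrow> \<forall>\<beta>\<in>A. is_comp \<beta> \<Longrightarrow> T (\<lambda>b. \<Sum>\<beta>\<in>A. c \<beta> * M \<beta> b) = (\<lambda>b. \<Sum>\<beta>\<in>A. c \<beta> * T (M \<beta>) b)"
proof (induction A rule: finite_induct)
  case empty
  have "T (\<lambda>b. 0 * M [] b + 0 * M [] b) = (\<lambda>b. 0 * T (M []) b + 0 * T (M []) b)"
    by (rule Theta_facts(2)[OF T qsym_M qsym_M]) simp_all
  thus ?case by simp
next
  case (insert \<beta> A)
  have cb: "is_comp \<beta>" and cA: "\<forall>\<beta>\<in>A. is_comp \<beta>" using insert.prems by auto
  have "(\<lambda>b. \<Sum>\<gamma>\<in>insert \<beta> A. c \<gamma> * M \<gamma> b) = (\<lambda>b. 1 * (\<Sum>\<gamma>\<in>A. c \<gamma> * M \<gamma> b) + c \<beta> * M \<beta> b)"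
    using insert.hyps by (simp add: add.commute)
  hence "T (\<lambda>b. \<Sum>\<gamma>\<in>insert \<beta> A. c \<gamma> * M \<gamma> b) = (\<lambda>b. 1 * T (\<lambda>b. \<Sum>\<gamma>\<in>A. c \<gamma> * M \<gamma> b) b + c \<beta> * T (M \<beta>) b)"
    using Theta_facts(2)[OF T qsym_sum[OF insert.hyps(1) cA, of c] qsym_M[OF cb], of 1 "c \<beta>"] by simp
  also have "\<dots> = (\<lambda>b. \<Sum>\<gamma>\<in>insert \<beta> A. c \<gamma> * T (M \<gamma>) b)"
    using insert.IH[OF cA] insert.hyps by (simp add: add.commute)
  finally show ?case .
qed


lemma psum_0[simp]: "psum a 0 = 0" by (simp add: psum_def)
lemma psum_ge_len: "length a \<le> k \<Longrightarrow> psum a k = sum_list a" by (simp add: psum_def)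
lemma psum_append: "psum (B @ a') i = psum B i + psum a' (i - length B)"
  by (simp add: psum_def)
lemma psum_Cons_Suc: "psum (y # \<beta>) (Suc i) = y + psum \<beta> i" by (simp add: psum_def)
lemma psum_add: "psum a (i + j) = psum a i + psum (drop i a) j"
  by (simp add: psum_def take_add)

lemma psum_strict:
  assumes "is_comp a" "i < j" "j \<le> length a"
  shows "psum a i < psum a j"
proof -
  have "psum a j = psum a i + psum (drop i a) (j - i)" using psum_add[of a i "j - i"] assms(2) by simp
  moreover have "psum (drop i a) (j - i) > 0"
    unfolding psum_def
    by (rule sum_pos) (use assms in \<open>auto intro: is_comp_take is_comp_drop\<close>)
  ultimately show ?thesis by simp
qed

lemma psum_mono: "i \<le> j \<Longrightarrow> psum a i \<le> psum a j"
  using psum_add[of a i "j - i"] by simp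

lemma psum_le_iff: "is_comp a \<Longrightarrow> i \<le> length a \<Longrightarrow> j \<le> length a \<Longrightarrow> psum a i \<le> psum a j \<longleftrightarrow> i \<le> j"
  by (meson linorder_not_le psum_mono psum_strict)

lemma psum_eq_iff: "is_comp a \<Longrightarrow> i \<le> length a \<Longrightarrow> j \<le> length a \<Longrightarrow> psum a i = psum a j \<longleftrightarrow> i = j"
  using psum_le_iff[of a i j] psum_le_iff[of a j i] by auto

lemma descents_Cons: "descents (y # \<beta>) = (if \<beta> = [] then {} else insert y ((+) y ` descents \<beta>))"
proof (cases "\<beta> = []")
  case True thus ?thesis by (simp add: descents_def)
next
  case False
  have "descents (y # \<beta>) = {y + psum \<beta> j | j. j < length \<beta>}"
  proof (rule set_eqI)
    fix d
    show "d \<in> descents (y # \<beta>) \<longleftrightarrow> d \<in> {y + psum \<beta> j | j. j < length \<beta>}"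
    proof
      assume "d \<in> descents (y # \<beta>)"
      then obtain i where "d = psum (y # \<beta>) i" "0 < i" "i < Suc (length \<beta>)" by (auto simp: descents_def)
      thus "d \<in> {y + psum \<beta> j | j. j < length \<beta>}" by (cases i) (auto simp: psum_Cons_Suc)
    next
      assume "d \<in> {y + psum \<beta> j | j. j < length \<beta>}"
      then obtain j where "d = y + psum \<beta> j" "j < length \<beta>" by auto
      thus "d \<in> descents (y # \<beta>)" unfolding descents_def
        by (intro CollectI exI[of _ "Suc j"]) (simp add: psum_Cons_Suc)
    qed
  qed
  also have "\<dots> = insert y ((+) y ` descents \<beta>)"
  proof (rule set_eqI)
    fix d
    show "d \<in> {y + psum \<beta> j | j. j < length \<beta>} \<longleftrightarrow> d \<in> insert y ((+) y ` descents \<beta>)"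
    proof
      assume "d \<in> {y + psum \<beta> j | j. j < length \<beta>}"
      then obtain j where j: "d = y + psum \<beta> j" "j < length \<beta>" by auto
      thus "d \<in> insert y ((+) y ` descents \<beta>)"
        by (cases "j = 0") (auto simp: descents_def)
    next
      assume "d \<in> insert y ((+) y ` descents \<beta>)"
      thus "d \<in> {y + psum \<beta> j | j. j < length \<beta>}"
      proof
        assume "d = y" thus ?thesis using False by (intro CollectI exI[of _ 0]) auto
      next
        assume "d \<in> (+) y ` descents \<beta>"
        thus ?thesis by (auto simp: descents_def)
      qed
    qed
  qed
  finally show ?thesis using False by simp
qed

lemma descents_append:
  assumes "B \<noteq> []" "a' \<noteq> []"
  shows "descents (B @ a') = descents B \<union> {sum_list B} \<union> (+) (sum_list B) ` descents a'"
proof (rule set_eqI)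
  fix d
  show "d \<in> descents (B @ a') \<longleftrightarrow> d \<in> descents B \<union> {sum_list B} \<union> (+) (sum_list B) ` descents a'"
  proof
    assume "d \<in> descents (B @ a')"
    then obtain i where i: "d = psum (B @ a') i" "0 < i" "i < length B + length a'" by (auto simp: descents_def)
    consider "i < length B" | "i = length B" | "i > length B" by linarith
    thus "d \<in> descents B \<union> {sum_list B} \<union> (+) (sum_list B) ` descents a'"
    proof cases
      case 1 thus ?thesis using i by (auto simp: psum_append descents_def)
    next
      case 2 thus ?thesis using i by (simp add: psum_append psum_ge_len)
    next
      case 3
      hence "d = sum_list B + psum a' (i - length B)" "0 < i - length B" "i - length B < length a'"
        using i by (auto simp: psum_append psum_ge_len)
      moreover from this have "psum a' (i - length B) \<in> descents a'" unfolding descents_def by blast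
      ultimately show ?thesis by blast
    qed
  next
    assume "d \<in> descents B \<union> {sum_list B} \<union> (+) (sum_list B) ` descents a'"
    thus "d \<in> descents (B @ a')"
    proof (elim UnE)
      assume "d \<in> descents B"
      then obtain i where "d = psum B i" "0 < i" "i < length B" by (auto simp: descents_def)
      thus ?thesis unfolding descents_def by (intro CollectI exI[of _ i]) (simp add: psum_append)
    next
      assume "d \<in> {sum_list B}"
      thus ?thesis unfolding descents_def using assms
        by (intro CollectI exI[of _ "length B"]) (simp add: psum_append psum_ge_len)
    next
      assume "d \<in> (+) (sum_list B) ` descents a'"
      then obtain j where "d = sum_list B + psum a' j" "0 < j" "j < length a'" by (auto simp: descents_def)
      thus ?thesis unfolding descents_def
        by (intro CollectI exI[of _ "length B + j"]) (simp add: psum_append psum_ge_len)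
    qed
  qed
qed

lemma descents_lt: "is_comp B \<Longrightarrow> d \<in> descents B \<Longrightarrow> d < sum_list B"
  unfolding descents_def using psum_strict[of B _ "length B"] psum_ge_len[of B "length B"] by auto

lemma descents_pos: "is_comp a \<Longrightarrow> d \<in> descents a \<Longrightarrow> 0 < d"
  unfolding descents_def using psum_strict[of a 0] by fastforce

lemma descents_single: "descents [y] = {}" by (simp add: descents_Cons)

lemma parts_blocks: "P \<in> parts a \<Longrightarrow> is_comp a \<Longrightarrow> B \<in> set P \<Longrightarrow> is_comp B \<and> B \<noteq> []"
  unfolding parts_def is_comp_def by auto

lemma parts_Cons': "B # P \<in> parts (B @ a') \<longleftrightarrow> B \<noteq> [] \<and> P \<in> parts a'"
  unfolding parts_def by auto

lemma is_comp_map_sum: "P \<in> parts a \<Longrightarrow> is_comp a \<Longrightarrow> is_comp (map sum_list P)"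
  using parts_blocks sum_pos unfolding is_comp_def by fastforce

lemma sum_map_sum: "P \<in> parts a \<Longrightarrow> sum_list (map sum_list P) = sum_list a"
proof -
  have "sum_list (concat P) = sum_list (map sum_list P)" by (induction P) auto
  thus "P \<in> parts a \<Longrightarrow> sum_list (map sum_list P) = sum_list a" unfolding parts_def by auto
qed

lemma descents_parts: "P \<in> parts a \<Longrightarrow> is_comp a \<Longrightarrow> descents (map sum_list P) \<subseteq> descents a"
proof (induction P arbitrary: a)
  case Nil thus ?case by (simp add: descents_def)
next
  case (Cons B P)
  have a: "a = B @ concat P" "B \<noteq> []" "P \<in> parts (concat P)" using Cons.prems by (auto simp: parts_def)
  show ?case
  proof (cases "P = []")
    case True thus ?thesis by (simp add: descents_single)
  next
    case False
    then obtain C P'' where "P = C # P''" by (cases P) auto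
    hence cne: "concat P \<noteq> []" using a(3) unfolding parts_def by auto
    have "descents (map sum_list P) \<subseteq> descents (concat P)"
      using Cons.IH[OF a(3)] Cons.prems(2) a(1) by (simp add: is_comp_append)
    thus ?thesis using False a cne by (auto simp: descents_Cons descents_append)
  qed
qed

lemma comp_le_parts: "is_comp a \<Longrightarrow> P \<in> parts a \<Longrightarrow> comp_le (map sum_list P) a"
  unfolding comp_le_def using is_comp_map_sum sum_map_sum descents_parts by blast

lemma comp_le_Nil: "is_comp a \<Longrightarrow> sum_list a = 0 \<Longrightarrow> a = []"
  by (cases a) (auto simp: is_comp_def)

lemma parts_of_comp_le:
  "is_comp a \<Longrightarrow> comp_le \<beta> a \<Longrightarrow> \<exists>P\<in>parts a. map sum_list P = \<beta>"
proof (induction \<beta> arbitrary: a)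
  case Nil
  hence "a = []" using comp_le_Nil by (auto simp: comp_le_def)
  thus ?case by (intro bexI[of _ "[]"]) (auto simp: parts_def)
next
  case (Cons y \<beta>')
  have le: "is_comp (y # \<beta>')" "sum_list (y # \<beta>') = sum_list a" "descents (y # \<beta>') \<subseteq> descents a"
    using Cons.prems by (auto simp: comp_le_def)
  have ypos: "y > 0" using le(1) by (simp add: is_comp_def)
  show ?case
  proof (cases "\<beta>' = []")
    case True
    hence "a \<noteq> []" using le ypos by auto
    thus ?thesis using True le by (intro bexI[of _ "[a]"]) (auto simp: parts_def)
  next
    case False
    have "y \<in> descents a" using le(3) False by (simp add: descents_Cons)
    then obtain k where k: "y = psum a k" "0 < k" "k < length a" by (auto simp: descents_def)
    define B a' where "B = take k a" "a' = drop k a"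
    have aB: "a = B @ a'" "B \<noteq> []" "a' \<noteq> []" "sum_list B = y" using k B_a'_def by (auto simp: psum_def)
    have cB: "is_comp B" "is_comp a'" using Cons.prems(1) aB(1) by (auto simp: is_comp_append)
    have "descents \<beta>' \<subseteq> descents a'"
    proof
      fix d assume d: "d \<in> descents \<beta>'"
      have dpos: "d > 0" using descents_pos[OF _ d] le(1) by (simp add: is_comp_def)
      have "y + d \<in> descents a" using le(3) False d by (auto simp: descents_Cons)
      hence "y + d \<in> descents B \<union> {y} \<union> (+) y ` descents a'"
        using descents_append[OF aB(2) aB(3)] aB by simp
      moreover have "y + d \<notin> descents B" using descents_lt[OF cB(1)] aB(4) by fastforce
      ultimately show "d \<in> descents a'" using dpos by auto
    qed
    moreover have "sum_list \<beta>' = sum_list a'" using le(2) aB by simp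
    moreover have "is_comp \<beta>'" using le(1) by (simp add: is_comp_def)
    ultimately have "comp_le \<beta>' a'" using cB by (simp add: comp_le_def)
    then obtain P' where P': "P' \<in> parts a'" "map sum_list P' = \<beta>'" using Cons.IH cB by blast
    show ?thesis using P' aB by (intro bexI[of _ "B # P'"]) (auto simp: parts_def)
  qed
qed

lemma parts_inj: "is_comp a \<Longrightarrow> inj_on (map sum_list) (parts a)"
proof -
  have "\<forall>a Q. is_comp a \<longrightarrow> P \<in> parts a \<longrightarrow> Q \<in> parts a \<longrightarrow> map sum_list P = map sum_list Q \<longrightarrow> P = Q" for P
  proof (induction P)
    case Nil thus ?case by (auto simp: parts_def)
  next
    case (Cons B P)
    show ?case
    proof (intro allI impI)
      fix a Q assume a: "is_comp a" "B # P \<in> parts a" "Q \<in> parts a" "map sum_list (B # P) = map sum_list Q"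
      then obtain B' Q' where Q: "Q = B' # Q'" by (cases Q) auto
      have h: "a = B @ concat P" "a = B' @ concat Q'" "B \<noteq> []" "B' \<noteq> []" "P \<in> parts (concat P)" "Q' \<in> parts (concat Q')"
        using a Q by (auto simp: parts_def)
      have s: "sum_list B = sum_list B'" using a(4) Q by simp
      have "psum a (length B) = sum_list B" unfolding h(1) by (simp add: psum_append psum_ge_len)
      moreover have "psum a (length B') = sum_list B'" unfolding h(2) by (simp add: psum_append psum_ge_len)
      ultimately have "psum a (length B) = psum a (length B')" using s by simp
      moreover have l1: "length B \<le> length a" using h(1) by simp
      moreover have l2: "length B' \<le> length a" using h(2) by simp
      ultimately have "length B = length B'" using psum_eq_iff[OF a(1) l1 l2] by simp
      hence BB: "B = B'" using h by (metis append_eq_append_conv)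
      hence "concat P = concat Q'" using h by simp
      moreover have "is_comp (concat P)" using a(1) h(1) by (simp add: is_comp_append)
      ultimately have "P = Q'" using Cons.IH h a(4) Q by auto
      thus "B # P = Q" using BB Q by simp
    qed
  qed
  thus "is_comp a \<Longrightarrow> inj_on (map sum_list) (parts a)" by (auto simp: inj_on_def)
qed


lemma OtE_app1: "OtE B \<subseteq> OtE (B @ a')"
proof
  fix i assume "i \<in> OtE B"
  hence i: "0 < i" "i < length B" "odd (B ! (i - 1))" "even (B ! i)" by (auto simp: OtE_def)
  have "(B @ a') ! (i - 1) = B ! (i - 1)" by (rule nth_append_left) (use i in simp)
  moreover have "(B @ a') ! i = B ! i" by (rule nth_append_left) (use i in simp)
  ultimately show "i \<in> OtE (B @ a')" using i by (auto simp: OtE_def)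
qed

lemma OtE_app2: "(\<lambda>j. length B + j) ` OtE a' \<subseteq> OtE (B @ a')"
proof
  fix i assume "i \<in> (\<lambda>j. length B + j) ` OtE a'"
  then obtain j where j: "i = length B + j" "0 < j" "j < length a'" "odd (a' ! (j - 1))" "even (a' ! j)"
    by (auto simp: OtE_def)
  have "i - 1 = length B + (j - 1)" using j by simp
  hence "(B @ a') ! (i - 1) = a' ! (j - 1)" by (simp add: nth_append_length_plus)
  moreover have "(B @ a') ! i = a' ! j" using j by (simp add: nth_append_length_plus)
  ultimately show "i \<in> OtE (B @ a')" using j by (auto simp: OtE_def)
qed

lemma OtE_app3: "OtE (B @ a') \<subseteq> OtE B \<union> {length B} \<union> (\<lambda>j. length B + j) ` OtE a'"
proof
  fix i assume "i \<in> OtE (B @ a')"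
  hence i: "0 < i" "i < length B + length a'" "odd ((B @ a') ! (i - 1))" "even ((B @ a') ! i)"
    by (auto simp: OtE_def)
  consider "i < length B" | "i = length B" | "i > length B" by linarith
  thus "i \<in> OtE B \<union> {length B} \<union> (\<lambda>j. length B + j) ` OtE a'"
  proof cases
    case 1
    have "(B @ a') ! (i - 1) = B ! (i - 1)" by (rule nth_append_left) (use 1 in simp)
    moreover have "(B @ a') ! i = B ! i" by (rule nth_append_left) (use 1 in simp)
    ultimately have "i \<in> OtE B" using i 1 by (auto simp: OtE_def)
    thus ?thesis by simp
  next
    case 2 thus ?thesis by simp
  next
    case 3
    define j where "j = i - length B"
    have ij: "i = length B + j" "i - 1 = length B + (j - 1)" "0 < j" using 3 j_def by auto
    have "(B @ a') ! (i - 1) = a' ! (j - 1)" unfolding ij(2) by (rule nth_append_length_plus)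
    moreover have "(B @ a') ! i = a' ! j" unfolding ij(1) by (rule nth_append_length_plus)
    ultimately have "j \<in> OtE a'" using i ij by (auto simp: OtE_def)
    thus ?thesis using ij by blast
  qed
qed

lemma OtE_Nil: "OtE [] = {}" by (simp add: OtE_def)

lemma OtE_sub: "OtE a \<subseteq> {0<..<length a}" by (auto simp: OtE_def)

lemma OtE_parts:
  "is_comp a \<Longrightarrow> P \<in> parts a \<Longrightarrow> (psum a ` OtE a \<subseteq> descents (map sum_list P) \<longleftrightarrow> (\<forall>B\<in>set P. okb B))"
proof (induction P arbitrary: a)
  case Nil
  hence "a = []" by (simp add: parts_def)
  thus ?case by (simp add: OtE_Nil)
next
  case (Cons B P')
  define a' where "a' = concat P'"
  have a: "a = B @ a'" "B \<noteq> []" "P' \<in> parts a'" using Cons.prems a'_def by (auto simp: parts_def)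
  have cB: "is_comp B" "is_comp a'" using Cons.prems(1) a(1) by (auto simp: is_comp_append)
  show ?case
  proof (cases "P' = []")
    case True
    hence "a' = []" using a'_def by simp
    thus ?thesis using True a by (simp add: descents_single okb_def)
  next
    case False
    then obtain C P'' where "P' = C # P''" by (cases P') auto
    hence a'ne: "a' \<noteq> []" using a(3) unfolding parts_def by auto
    define D' where "D' = descents (map sum_list P')"
    have D: "descents (map sum_list (B # P')) = insert (sum_list B) ((+) (sum_list B) ` D')"
      using False by (simp add: descents_Cons D'_def)
    have ps1: "psum a i = psum B i" if "i \<le> length B" for i using that a(1) by (simp add: psum_append)
    have ps2: "psum a (length B + j) = sum_list B + psum a' j" for j
      using a(1) by (simp add: psum_append psum_ge_len)
    have IH: "psum a' ` OtE a' \<subseteq> D' \<longleftrightarrow> (\<forall>B\<in>set P'. okb B)"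
      unfolding D'_def by (rule Cons.IH[OF cB(2) a(3)])
    show ?thesis
    proof
      assume H: "psum a ` OtE a \<subseteq> descents (map sum_list (B # P'))"
      have "okb B"
      proof (unfold okb_def, rule ccontr)
        assume "OtE B \<noteq> {}"
        then obtain i where i: "i \<in> OtE B" by auto
        hence iB: "i < length B" by (auto simp: OtE_def)
        have "i \<in> OtE a" using i OtE_app1 a(1) by blast
        hence "psum a i \<in> descents (map sum_list (B # P'))" using H by blast
        hence "psum B i \<in> insert (sum_list B) ((+) (sum_list B) ` D')" using D ps1[of i] iB by simp
        moreover have "psum B i < sum_list B" using psum_strict[OF cB(1) iB] psum_ge_len[of B "length B"] by simp
        ultimately show False by auto
      qed
      moreover have "psum a' ` OtE a' \<subseteq> D'"
      proof
        fix d assume "d \<in> psum a' ` OtE a'"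
        then obtain j where j: "j \<in> OtE a'" "d = psum a' j" by auto
        have "length B + j \<in> OtE a" using j OtE_app2 a(1) by blast
        hence "psum a (length B + j) \<in> descents (map sum_list (B # P'))" using H by blast
        hence "sum_list B + d \<in> insert (sum_list B) ((+) (sum_list B) ` D')" using D ps2[of j] j(2) by simp
        moreover have "d > 0" using j psum_strict[OF cB(2), of 0 j] by (auto simp: OtE_def)
        ultimately show "d \<in> D'" by auto
      qed
      ultimately show "\<forall>B'\<in>set (B # P'). okb B'" using IH by simp
    next
      assume H: "\<forall>B'\<in>set (B # P'). okb B'"
      hence o: "OtE B = {}" and sub: "psum a' ` OtE a' \<subseteq> D'" using IH by (auto simp: okb_def)
      show "psum a ` OtE a \<subseteq> descents (map sum_list (B # P'))"
      proof
        fix d assume "d \<in> psum a ` OtE a"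
        then obtain i where i: "i \<in> OtE a" "d = psum a i" by auto
        hence "i \<in> OtE B \<union> {length B} \<union> (\<lambda>j. length B + j) ` OtE a'" using OtE_app3 a(1) by blast
        thus "d \<in> descents (map sum_list (B # P'))"
        proof (elim UnE)
          assume "i \<in> OtE B" thus ?thesis using o by simp
        next
          assume "i \<in> {length B}"
          thus ?thesis using i D ps1[of "length B"] psum_ge_len[of B "length B"] by simp
        next
          assume "i \<in> (\<lambda>j. length B + j) ` OtE a'"
          then obtain j where "j \<in> OtE a'" "i = length B + j" by auto
          thus ?thesis using i D ps2 sub by auto
        qed
      qed
    qed
  qed
qed

lemma sum_take_drop: "x \<le> y \<Longrightarrow> sum_list (take (y - x) (drop x a)) = psum a y - psum a x"
  using psum_add[of a x "y - x"] by (simp add: psum_def)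

lemma block_sums_props:
  assumes a: "is_comp a" and ne: "a \<noteq> []" and ks: "set ks \<subseteq> {0<..<length a}" "sorted ks" "distinct ks"
  shows "is_comp (block_sums a ks) \<and> sum_list (block_sums a ks) = sum_list a \<and>
         descents (block_sums a ks) = psum a ` set ks"
proof -
  define bs where "bs = 0 # ks @ [length a]"
  define m where "m = length ks"
  have lbs: "length bs = m + 2" by (simp add: bs_def m_def)
  have bs0: "bs ! 0 = 0" by (simp add: bs_def)
  have bsl: "bs ! (m + 1) = length a" by (simp add: bs_def m_def nth_append)
  have bsk: "bs ! (Suc i) = ks ! i" if "i < m" for i using that by (simp add: bs_def m_def nth_append)
  have adj: "bs ! i < bs ! (Suc i)" if "i \<le> m" for i
  proof (cases "i = 0")
    case True
    thus ?thesis
    proof (cases "m = 0")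
      case True thus ?thesis using \<open>i = 0\<close> bs0 bsl ne by simp
    next
      case False
      hence "ks ! 0 \<in> set ks" by (simp add: m_def)
      thus ?thesis using \<open>i = 0\<close> bs0 bsk[of 0] False ks(1) by auto
    qed
  next
    case False
    hence bi: "bs ! i = ks ! (i - 1)" using bsk[of "i - 1"] that by simp
    show ?thesis
    proof (cases "i = m")
      case True
      hence "ks ! (i - 1) \<in> set ks" using False m_def by simp
      thus ?thesis using bi True bsl ks(1) by auto
    next
      case False
      hence "i < m" using that by simp
      have "ks ! (i - 1) < ks ! i"
        using ks(2,3) \<open>i < m\<close> \<open>i \<noteq> 0\<close> unfolding m_def
        by (simp add: sorted_wrt_nth_less strict_sorted_iff)
      thus ?thesis using bi bsk[OF \<open>i < m\<close>] by simp
    qed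
  qed
  have mono: "bs ! i \<le> bs ! j" if "i \<le> j" "j \<le> m + 1" for i j
    using that
  proof (induction j)
    case 0 thus ?case by simp
  next
    case (Suc j)
    show ?case
    proof (cases "i = Suc j")
      case True thus ?thesis by simp
    next
      case False
      hence "bs ! i \<le> bs ! j" using Suc by simp
      also have "\<dots> < bs ! Suc j" using adj Suc by simp
      finally show ?thesis by simp
    qed
  qed
  have bsle: "bs ! i \<le> length a" if "i \<le> m + 1" for i using mono[OF that order.refl] bsl by simp
  define L where "L = block_sums a ks"
  have L: "L = map (\<lambda>i. psum a (bs ! (i + 1)) - psum a (bs ! i)) [0..<m + 1]"
    unfolding L_def block_sums_def Let_def bs_def[symmetric] m_def[symmetric]
    by (intro map_cong refl, rule sum_take_drop) (use adj in \<open>auto simp: less_imp_le\<close>)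
  have lL: "length L = m + 1" using L by simp
  have Lnth: "L ! i = psum a (bs ! (i + 1)) - psum a (bs ! i)" if "i < m + 1" for i
    using that L by (simp del: upt_Suc)
  have compL: "is_comp L"
    unfolding is_comp_def
  proof
    fix x assume "x \<in> set L"
    then obtain i where i: "i < m + 1" "x = L ! i" using lL by (auto simp: in_set_conv_nth)
    have 1: "bs ! i < bs ! (i + 1)" using adj[of i] i by simp
    have 2: "bs ! (i + 1) \<le> length a" using bsle[of "i + 1"] i by simp
    have "psum a (bs ! i) < psum a (bs ! (i + 1))" by (rule psum_strict[OF a 1 2])
    thus "0 < x" using i Lnth by simp
  qed
  have psL: "psum L j = psum a (bs ! j)" if "j \<le> m + 1" for j
    using that
  proof (induction j)
    case 0 thus ?case using bs0 by simp
  next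
    case (Suc j)
    have "psum L (Suc j) = psum L j + L ! j"
      using Suc.prems lL by (simp add: psum_def take_Suc_conv_app_nth)
    also have "\<dots> = psum a (bs ! j) + (psum a (bs ! (j + 1)) - psum a (bs ! j))"
      using Suc by (simp add: Lnth)
    also have "\<dots> = psum a (bs ! Suc j)" using psum_mono[of "bs ! j" "bs ! Suc j" a] adj[of j] Suc.prems by simp
    finally show ?case .
  qed
  have "sum_list L = sum_list a"
    using psL[of "m + 1"] bsl psum_ge_len[of L "m + 1"] psum_ge_len[of a "length a"] lL by simp
  moreover have "descents L = psum a ` set ks"
  proof (rule set_eqI)
    fix d
    show "d \<in> descents L \<longleftrightarrow> d \<in> psum a ` set ks"
    proof
      assume "d \<in> descents L"
      then obtain j where j: "d = psum L j" "0 < j" "j < m + 1" using lL by (auto simp: descents_def)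
      hence "d = psum a (ks ! (j - 1))" using psL[of j] bsk[of "j - 1"] by simp
      moreover have "ks ! (j - 1) \<in> set ks" using j m_def by simp
      ultimately show "d \<in> psum a ` set ks" by blast
    next
      assume "d \<in> psum a ` set ks"
      then obtain i where i: "i < m" "d = psum a (ks ! i)" by (auto simp: in_set_conv_nth m_def)
      hence "d = psum L (Suc i)" using psL[of "Suc i"] bsk[of i] by simp
      thus "d \<in> descents L" unfolding descents_def using i lL by auto
    qed
  qed
  ultimately show ?thesis using compL L_def by simp
qed

lemma m_o_props:
  assumes a: "is_comp a"
  shows "is_comp (m_o a) \<and> sum_list (m_o a) = sum_list a \<and> descents (m_o a) = psum a ` OtE a"
proof (cases "a = []")
  case True thus ?thesis by (simp add: m_o_def OtE_Nil descents_def)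
next
  case False
  have fin: "finite (OtE a)" using OtE_sub[of a] finite_subset by blast
  show ?thesis
    using block_sums_props[OF a False, of "sorted_list_of_set (OtE a)"] fin OtE_sub[of a] False
    by (simp add: m_o_def)
qed

lemma m_o_le_parts:
  assumes a: "is_comp a" and P: "P \<in> parts a"
  shows "comp_le (m_o a) (map sum_list P) \<longleftrightarrow> (\<forall>B\<in>set P. okb B)"
  using m_o_props[OF a] is_comp_map_sum[OF P a] sum_map_sum[OF P] OtE_parts[OF a P]
  by (simp add: comp_le_def)


lemma blk0:
  assumes a: "is_comp a" "a = B @ a'" "B \<noteq> []" and \<beta>: "\<beta> = sum_list B # \<beta>'"
  shows "{j. j < length a \<and> Q (a ! j) \<and> psum \<beta> 0 \<le> psum a j \<and> psum a (Suc j) \<le> psum \<beta> (Suc 0)}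
       = {j. j < length B \<and> Q (B ! j)}"
proof -
  have pB: "psum \<beta> (Suc 0) = psum a (length B)"
    using a \<beta> by (simp add: psum_Cons_Suc psum_append psum_ge_len)
  have lB: "length B \<le> length a" using a by simp
  show ?thesis
  proof (rule set_eqI)
    fix j
    show "j \<in> {j. j < length a \<and> Q (a ! j) \<and> psum \<beta> 0 \<le> psum a j \<and> psum a (Suc j) \<le> psum \<beta> (Suc 0)}
       \<longleftrightarrow> j \<in> {j. j < length B \<and> Q (B ! j)}"
    proof (cases "j < length a")
      case True
      hence "psum a (Suc j) \<le> psum a (length B) \<longleftrightarrow> Suc j \<le> length B"
        using psum_le_iff[OF a(1), of "Suc j" "length B"] lB by simp
      moreover have "j < length B \<Longrightarrow> a ! j = B ! j" using a(2) by (simp add: nth_append)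
      ultimately show ?thesis using True pB by auto
    next
      case False thus ?thesis using lB by auto
    qed
  qed
qed

lemma blkS:
  assumes a: "is_comp a" "a = B @ a'" "B \<noteq> []" and \<beta>: "\<beta> = sum_list B # \<beta>'"
  shows "{j. j < length a \<and> Q (a ! j) \<and> psum \<beta> (Suc i) \<le> psum a j \<and> psum a (Suc j) \<le> psum \<beta> (Suc (Suc i))}
       = (\<lambda>j. length B + j) ` {j. j < length a' \<and> Q (a' ! j) \<and> psum \<beta>' i \<le> psum a' j \<and> psum a' (Suc j) \<le> psum \<beta>' (Suc i)}"
proof -
  have ps2: "psum a (length B + j) = sum_list B + psum a' j" for j
    using a(2) by (simp add: psum_append psum_ge_len)
  have pb: "psum \<beta> (Suc k) = sum_list B + psum \<beta>' k" for k using \<beta> by (simp add: psum_Cons_Suc)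
  have lB: "length B \<le> length a" using a by simp
  have nth: "a ! (length B + j) = a' ! j" for j using a(2) by (simp add: nth_append_length_plus)
  show ?thesis
  proof (rule set_eqI)
    fix j
    show "j \<in> {j. j < length a \<and> Q (a ! j) \<and> psum \<beta> (Suc i) \<le> psum a j \<and> psum a (Suc j) \<le> psum \<beta> (Suc (Suc i))}
      \<longleftrightarrow> j \<in> (\<lambda>j. length B + j) ` {j. j < length a' \<and> Q (a' ! j) \<and> psum \<beta>' i \<le> psum a' j \<and> psum a' (Suc j) \<le> psum \<beta>' (Suc i)}"
    proof
      assume j: "j \<in> {j. j < length a \<and> Q (a ! j) \<and> psum \<beta> (Suc i) \<le> psum a j \<and> psum a (Suc j) \<le> psum \<beta> (Suc (Suc i))}"
      hence "psum a (length B) \<le> psum a j" using pb[of i] ps2[of 0] by auto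
      hence "length B \<le> j" using psum_le_iff[OF a(1) lB, of j] j by auto
      then obtain j' where j': "j = length B + j'" using le_Suc_ex by blast
      have "Suc j = length B + Suc j'" using j' by simp
      hence "j' < length a' \<and> Q (a' ! j') \<and> psum \<beta>' i \<le> psum a' j' \<and> psum a' (Suc j') \<le> psum \<beta>' (Suc i)"
        using j j' a(2) ps2[of j'] ps2[of "Suc j'"] pb[of i] pb[of "Suc i"] nth[of j'] by auto
      thus "j \<in> (\<lambda>j. length B + j) ` {j. j < length a' \<and> Q (a' ! j) \<and> psum \<beta>' i \<le> psum a' j \<and> psum a' (Suc j) \<le> psum \<beta>' (Suc i)}"
        using j' by blast
    next
      assume "j \<in> (\<lambda>j. length B + j) ` {j. j < length a' \<and> Q (a' ! j) \<and> psum \<beta>' i \<le> psum a' j \<and> psum a' (Suc j) \<le> psum \<beta>' (Suc i)}"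
      then obtain j' where j': "j = length B + j'" "j' < length a'" "Q (a' ! j')" "psum \<beta>' i \<le> psum a' j'"
        "psum a' (Suc j') \<le> psum \<beta>' (Suc i)" by blast
      have "Suc j = length B + Suc j'" using j' by simp
      thus "j \<in> {j. j < length a \<and> Q (a ! j) \<and> psum \<beta> (Suc i) \<le> psum a j \<and> psum a (Suc j) \<le> psum \<beta> (Suc (Suc i))}"
        using j' a(2) ps2[of j'] ps2[of "Suc j'"] pb[of i] pb[of "Suc i"] nth[of j'] by auto
    qed
  qed
qed

lemma coeff_parts:
  "is_comp a \<Longrightarrow> P \<in> parts a \<Longrightarrow> coeff_c a (map sum_list P) = prod_list (map cw P)"
proof (induction P arbitrary: a)
  case Nil thus ?case by (simp add: coeff_c_def)
next
  case (Cons B P')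
  define a' where "a' = concat P'"
  define \<beta>' where "\<beta>' = map sum_list P'"
  have a: "a = B @ a'" "B \<noteq> []" "P' \<in> parts a'" using Cons.prems a'_def by (auto simp: parts_def)
  have ca': "is_comp a'" using Cons.prems(1) a(1) by (simp add: is_comp_append)
  have \<beta>: "map sum_list (B # P') = sum_list B # \<beta>'" by (simp add: \<beta>'_def)
  have O0: "blockO a (sum_list B # \<beta>') 0 = oc B"
    unfolding blockO_def oc_def length_filter_conv_card using blk0[OF Cons.prems(1) a(1,2) refl, of "\<lambda>x. odd x"] by simp
  have E0: "blockE a (sum_list B # \<beta>') 0 = ec B"
    unfolding blockE_def blk0[OF Cons.prems(1) a(1,2) refl] ec_def length_filter_conv_card ..
  have OS: "blockO a (sum_list B # \<beta>') (Suc i) = blockO a' \<beta>' i" for i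
    unfolding blockO_def using blkS[OF Cons.prems(1) a(1,2) refl, of "\<lambda>x. odd x"] card_image[of "\<lambda>j. length B + j"]
    by (simp add: inj_on_def)
  have ES: "blockE a (sum_list B # \<beta>') (Suc i) = blockE a' \<beta>' i" for i
    unfolding blockE_def blkS[OF Cons.prems(1) a(1,2) refl] by (rule card_image) (simp add: inj_on_def)
  have "coeff_c a (sum_list B # \<beta>') = cw B * coeff_c a' \<beta>'"
    unfolding coeff_c_def length_Cons prod.lessThan_Suc_shift O0 E0 OS ES cw_def ..
  also have "coeff_c a' \<beta>' = prod_list (map cw P')" unfolding \<beta>'_def by (rule Cons.IH[OF ca' a(3)])
  finally show ?case using \<beta> by simp
qed

lemma prod_u: "prod_list (map u P) = (if \<forall>B\<in>set P. okb B then prod_list (map cw P) else 0)"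
  by (induction P) (auto simp: u_def)

lemma S_parts:
  assumes a: "is_comp a" and P: "P \<in> parts a"
  shows "S a (map sum_list P) = prod_list (map u P)"
  using comp_le_parts[OF a P] m_o_le_parts[OF a P] coeff_parts[OF a P]
  by (simp add: S_def prod_u)


definition Phi :: "nat list \<Rightarrow> nat list \<Rightarrow> complex" where
  "Phi a b = (\<Sum>P\<in>parts a. prod_list (map u P) * thM (map sum_list P) b)"
definition Psi :: "nat list \<Rightarrow> nat list \<Rightarrow> complex" where
  "Psi a b = (\<Sum>P\<in>parts a. if map sum_list P = b then prod_list (map u P) else 0)"
definition FF :: "nat list \<Rightarrow> complex" where
  "FF G = (\<Sum>P\<in>parts G - {[]}. prod_list (map u P) * phiE (map sum_list P))"

lemma prod_w: "prod_list (map w P) = prod_list (map u P) * (-1) ^ (sum_list (map oc P) + length P)"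
  by (induction P) (auto simp: w_def power_add)

lemma parity_sums: "even (sum_list (map sum_list P)) \<longleftrightarrow> even (sum_list (map oc P))"
proof (induction P)
  case (Cons B P)
  have "even (sum_list B) \<longleftrightarrow> even (oc B)" using odd_sum_list_iff[of B] by blast
  thus ?case using Cons.IH by (simp add: even_add)
qed simp

lemma FF_eq: "FF G = 2 * f G"
proof -
  have "FF G = (\<Sum>P\<in>parts G - {[]}. 2 * (if odd (sum_list (last P)) then prod_list (map w P) else 0))"
    unfolding FF_def
  proof (rule sum.cong[OF refl])
    fix P assume P: "P \<in> parts G - {[]}"
    have l: "last (map sum_list P) = sum_list (last P)" using P by (simp add: last_map)
    have "(-1::complex) ^ (sum_list (map sum_list P) + length (map sum_list P)) =
          (-1) ^ (sum_list (map oc P) + length P)"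
      using parity_sums[of P] by (simp add: minus_one_power_iff)
    thus "prod_list (map u P) * phiE (map sum_list P) =
          2 * (if odd (sum_list (last P)) then prod_list (map w P) else 0)"
      unfolding phiE_def l prod_w by simp
  qed
  also have "\<dots> = 2 * f G" unfolding f_def by (simp add: sum_distrib_left)
  finally show ?thesis .
qed

lemma FF_cf: "G \<noteq> [] \<Longrightarrow> FF G = (if \<forall>x\<in>set G. odd x then 2 ^ length G / fact (length G) else 0)"
proof -
  assume "G \<noteq> []"
  hence "2 * (2::complex) ^ (length G - 1) = 2 ^ length G" by (cases G) auto
  thus ?thesis using \<open>G \<noteq> []\<close> unfolding FF_eq f_cf by (simp add: mult.assoc[symmetric])
qed

lemma u_all_odd: "\<forall>x\<in>set G. odd x \<Longrightarrow> u G = 1 / fact (length G)"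
  using EO_all_odd[of G] oc_all_odd[of G] ec_all_odd[of G]
  by (simp add: u_def okb_iff_EO cw_def)

lemma Phi_Nil: "Phi a [] = (if a = [] then 1 else 0)"
proof -
  have "Phi a [] = (\<Sum>P\<in>parts a. if P = [] then 1 else 0)"
    unfolding Phi_def by (rule sum.cong) auto
  also have "\<dots> = (if a = [] then 1 else 0)"
    using sum.delta[OF parts_finite[of a], of "[]" "\<lambda>_. 1::complex"] Nil_in_parts[of a] by (simp add: eq_commute)
  finally show ?thesis .
qed

lemma Psi_Nil: "Psi a [] = (if a = [] then 1 else 0)"
proof -
  have "Psi a [] = (\<Sum>P\<in>parts a. if P = [] then 1 else 0)"
    unfolding Psi_def by (rule sum.cong) auto
  also have "\<dots> = (if a = [] then 1 else 0)"
    using sum.delta[OF parts_finite[of a], of "[]" "\<lambda>_. 1::complex"] Nil_in_parts[of a] by (simp add: eq_commute)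
  finally show ?thesis .
qed

lemma prod_take_drop: "prod_list (map h P) = prod_list (map h (take k P)) * prod_list (map h (drop k P))"
  by (metis append_take_drop_id map_append prod_list.append)

lemma Phi_Cons:
  "Phi a (x # b) = (\<Sum>m\<in>{1..length a}. if sum_list (take m a) = x then FF (take m a) * Phi (drop m a) b else 0)"
proof -
  define hh where "hh P1 P2 = prod_list (map u P1) * prod_list (map u P2) *
      (if sum_list (concat P1) = x then phiE (map sum_list P1) else 0) * thM (map sum_list P2) b" for P1 P2
  have sc: "sum_list (map sum_list Q) = sum_list (concat Q)" for Q :: "nat list list"
    by (induction Q) auto
  have "Phi a (x # b) = (\<Sum>P\<in>parts a. \<Sum>k\<in>{1..length P}. hh (take k P) (drop k P))"
    unfolding Phi_def thM.simps length_map
  proof (rule sum.cong[OF refl])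
    fix P
    show "prod_list (map u P) * (\<Sum>k = 1..length P.
             (if sum_list (take k (map sum_list P)) = x then phiE (take k (map sum_list P)) else 0) *
             thM (drop k (map sum_list P)) b) =
          (\<Sum>k = 1..length P. hh (take k P) (drop k P))"
      unfolding sum_distrib_left
      by (rule sum.cong[OF refl]) (simp add: hh_def take_map drop_map sc prod_take_drop[of u P])
  qed
  also have "\<dots> = (\<Sum>m\<in>{1..length a}. \<Sum>P1\<in>parts (take m a) - {[]}. \<Sum>P2\<in>parts (drop m a). hh P1 P2)"
    by (rule sum_parts_split)
  also have "\<dots> = (\<Sum>m\<in>{1..length a}. if sum_list (take m a) = x then FF (take m a) * Phi (drop m a) b else 0)"
  proof (rule sum.cong[OF refl])
    fix m
    have "(\<Sum>P1\<in>parts (take m a) - {[]}. \<Sum>P2\<in>parts (drop m a). hh P1 P2) =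
          (\<Sum>P1\<in>parts (take m a) - {[]}. \<Sum>P2\<in>parts (drop m a).
             (if sum_list (take m a) = x then (prod_list (map u P1) * phiE (map sum_list P1)) *
                (prod_list (map u P2) * thM (map sum_list P2) b) else 0))"
    proof (rule sum.cong[OF refl], rule sum.cong[OF refl])
      fix P1 P2 assume "P1 \<in> parts (take m a) - {[]}"
      hence "concat P1 = take m a" by (simp add: parts_def)
      thus "hh P1 P2 = (if sum_list (take m a) = x then (prod_list (map u P1) * phiE (map sum_list P1)) *
                (prod_list (map u P2) * thM (map sum_list P2) b) else 0)"
        by (simp add: hh_def)
    qed
    also have "\<dots> = (if sum_list (take m a) = x then FF (take m a) * Phi (drop m a) b else 0)"
      by (simp add: FF_def Phi_def sum_product)
    finally show "(\<Sum>P1\<in>parts (take m a) - {[]}. \<Sum>P2\<in>parts (drop m a). hh P1 P2) =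
          (if sum_list (take m a) = x then FF (take m a) * Phi (drop m a) b else 0)" .
  qed
  finally show ?thesis .
qed

lemma Psi_Cons:
  "Psi a (x # b) = (\<Sum>m\<in>{1..length a}. if sum_list (take m a) = x then u (take m a) * Psi (drop m a) b else 0)"
proof -
  have "Psi a (x # b) = (\<Sum>P\<in>parts a - {[]}. if map sum_list P = x # b then prod_list (map u P) else 0)"
    unfolding Psi_def by (rule sum.mono_neutral_right) (auto simp: parts_finite)
  also have "\<dots> = (\<Sum>m\<in>{1..length a}. \<Sum>P'\<in>parts (drop m a).
      if map sum_list (take m a # P') = x # b then prod_list (map u (take m a # P')) else 0)"
    by (rule sum_parts_first)
  also have "\<dots> = (\<Sum>m\<in>{1..length a}. if sum_list (take m a) = x then u (take m a) * Psi (drop m a) b else 0)"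
    unfolding Psi_def by (rule sum.cong[OF refl]) (auto simp: sum_distrib_left intro!: sum.cong)
  finally show ?thesis .
qed

lemma Phi_odd: "\<forall>y\<in>set a. odd y \<Longrightarrow> Phi a b = 2 ^ length a * Psi a b"
proof (induction b arbitrary: a)
  case Nil thus ?case by (simp add: Phi_Nil Psi_Nil)
next
  case (Cons x b)
  have "Phi a (x # b) = (\<Sum>m\<in>{1..length a}. 2 ^ length a * (if sum_list (take m a) = x then u (take m a) * Psi (drop m a) b else 0))"
    unfolding Phi_Cons
  proof (rule sum.cong[OF refl])
    fix m assume m: "m \<in> {1..length a}"
    have t1: "\<forall>y\<in>set (take m a). odd y" using Cons.prems by (blast dest: in_set_takeD)
    have t2: "take m a \<noteq> []" using m by auto
    note t = t1 t2
    have d: "\<forall>y\<in>set (drop m a). odd y" using Cons.prems by (blast dest: in_set_dropD)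
    have lt: "length (take m a) = m" using m by simp
    have FF: "FF (take m a) = 2 ^ m * u (take m a)"
      using FF_cf[OF t(2)] u_all_odd[OF t(1)] t(1) lt by simp
    have "(2::complex) ^ length a = 2 ^ m * 2 ^ (length a - m)" using m by (simp flip: power_add)
    thus "(if sum_list (take m a) = x then FF (take m a) * Phi (drop m a) b else 0) =
          2 ^ length a * (if sum_list (take m a) = x then u (take m a) * Psi (drop m a) b else 0)"
      using FF Cons.IH[OF d] by simp
  qed
  also have "\<dots> = 2 ^ length a * Psi a (x # b)" unfolding Psi_Cons by (simp add: sum_distrib_left)
  finally show ?case .
qed

lemma Phi_even: "\<not> (\<forall>y\<in>set a. odd y) \<Longrightarrow> Phi a b = 0"
proof (induction b arbitrary: a)
  case Nil
  hence "a \<noteq> []" by auto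
  thus ?case by (simp add: Phi_Nil)
next
  case (Cons x b)
  show ?case unfolding Phi_Cons
  proof (rule sum.neutral, rule ballI)
    fix m assume m: "m \<in> {1..length a}"
    show "(if sum_list (take m a) = x then FF (take m a) * Phi (drop m a) b else 0) = 0"
    proof (cases "\<forall>y\<in>set (take m a). odd y")
      case True
      have "set a = set (take m a @ drop m a)" by simp
      also have "\<dots> = set (take m a) \<union> set (drop m a)" by (rule set_append)
      finally have "\<not> (\<forall>y\<in>set (drop m a). odd y)" using Cons.prems True by blast
      thus ?thesis using Cons.IH by simp
    next
      case False
      have "take m a \<noteq> []" using m by auto
      thus ?thesis using FF_cf[of "take m a"] False by simp
    qed
  qed
qed


lemma S_nonzero: "S a b \<noteq> 0 \<Longrightarrow> comp_le b a" by (auto simp: S_def split: if_splits)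

theorem mainTheorem5:
  fixes a :: "nat list"
    and Theta :: "(nat list \<Rightarrow> complex) \<Rightarrow> (nat list \<Rightarrow> complex)"
  assumes "is_comp a"
    and "is_Theta Theta"
  shows "Theta (S a) =
    (if (\<forall>x\<in>set a. odd x) then (\<lambda>b. 2 ^ length a * S a b) else (\<lambda>b. 0))"
proof -
  note a = assms(1) and T = assms(2)
  define A where "A = map sum_list ` parts a"
  have finA: "finite A" unfolding A_def by (simp add: parts_finite)
  have compA: "\<forall>\<beta>\<in>A. is_comp \<beta>" unfolding A_def using is_comp_map_sum[OF _ a] by blast
  have SA0: "S a b = (if b \<in> A then S a b else 0)" for b
  proof (cases "b \<in> A")
    case False
    have "S a b = 0"
    proof (rule ccontr)
      assume "S a b \<noteq> 0"
      hence "comp_le b a" by (rule S_nonzero)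
      then obtain P where "P \<in> parts a" "map sum_list P = b" using parts_of_comp_le[OF a] by blast
      thus False using False unfolding A_def by blast
    qed
    thus ?thesis by simp
  qed simp
  have SA: "S a = (\<lambda>b. \<Sum>\<beta>\<in>A. S a \<beta> * M \<beta> b)"
  proof
    fix b
    have "(\<Sum>\<beta>\<in>A. S a \<beta> * M \<beta> b) = (\<Sum>\<beta>\<in>A. if b = \<beta> then S a \<beta> else 0)"
      by (rule sum.cong) (auto simp: M_apply)
    also have "\<dots> = (if b \<in> A then S a b else 0)" by (rule sum.delta'[OF finA])
    finally show "S a b = (\<Sum>\<beta>\<in>A. S a \<beta> * M \<beta> b)" using SA0[of b] by simp
  qed
  have inj: "inj_on (map sum_list) (parts a)" by (rule parts_inj[OF a])
  have reidx: "(\<Sum>\<beta>\<in>A. h \<beta>) = (\<Sum>P\<in>parts a. h (map sum_list P))" for h :: "nat list \<Rightarrow> complex"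
    unfolding A_def using sum.reindex[OF inj, of h] by (simp add: comp_def)
  have Th: "Theta (S a) = (\<lambda>b. Phi a b)"
  proof -
    have "Theta (S a) = Theta (\<lambda>b. \<Sum>\<beta>\<in>A. S a \<beta> * M \<beta> b)"
      by (rule arg_cong[where f=Theta, OF SA])
    also have "\<dots> = (\<lambda>b. \<Sum>\<beta>\<in>A. S a \<beta> * Theta (M \<beta>) b)"
      by (rule T_lin_sum[OF T finA compA])
    also have "\<dots> = (\<lambda>b. \<Sum>\<beta>\<in>A. S a \<beta> * thM \<beta> b)"
      using TM_thM[OF T] compA by simp
    also have "\<dots> = (\<lambda>b. Phi a b)"
    proof
      fix b
      show "(\<Sum>\<beta>\<in>A. S a \<beta> * thM \<beta> b) = Phi a b"
        unfolding reidx Phi_def by (rule sum.cong[OF refl]) (simp add: S_parts[OF a])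
    qed
    finally show ?thesis .
  qed
  have Ps: "Psi a b = S a b" for b
  proof -
    have "Psi a b = (\<Sum>P\<in>parts a. (\<lambda>\<beta>. if b = \<beta> then S a \<beta> else 0) (map sum_list P))"
      unfolding Psi_def by (rule sum.cong[OF refl]) (auto simp: S_parts[OF a])
    also have "\<dots> = (\<Sum>\<beta>\<in>A. if b = \<beta> then S a \<beta> else 0)" by (rule reidx[symmetric])
    also have "\<dots> = (if b \<in> A then S a b else 0)" by (rule sum.delta'[OF finA])
    finally show ?thesis using SA0[of b] by simp
  qed
  show ?thesis
  proof (cases "\<forall>x\<in>set a. odd x")
    case True
    thus ?thesis by (simp add: Th fun_eq_iff Phi_odd[OF True] Ps)
  next
    case False
    have "Theta (S a) = (\<lambda>b. 0)" unfolding Th using Phi_even[OF False] by (simp add: fun_eq_iff)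
    thus ?thesis by (subst if_not_P[OF False])
  qed
qed


end
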